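(* Let $\mathcal X,\mathcal Y$ be Polish spaces, $c:\mathcal X\times\mathcal Y\to\mathbb R$ measurable with $|c|\le1$, $\varepsilon>0$, $\mu\in\mathcal P(\mathcal X)$, $\nu\in\mathcal P(\mathcal Y)$, and $\psi_0\in L^{\exp}_\varepsilon(\nu)$. Let $\phi=(\psi_0)^{(c,\varepsilon)}_\nu$ and $\psi=\phi^{(c,\varepsilon)}_\mu$, and define the measure $\tilde\nu$ on $\mathcal Y$ by \[ \frac{d\tilde\nu}{d\nu}(y)=\int_{\mathcal X}\exp_\varepsilon(\phi(x)+\psi_0(y)-c(x,y))\,d\mu(x). \] Then $\tilde\nu$ is a probability measure on $\mathcal Y$; the pair $(\phi,\psi)$ maximizes $D_{\mu,\tilde\nu}$ over $L^{\exp}_\varepsilon(\mu)\times L^{\exp}_\varepsilon(\tilde\nu)$ (i.e. is a pair of dual optimizers for $\mu,\tilde\nu$); and \[ \mathrm{OT}_{c,\varepsilon}(\mu,\tilde\nu)=\int\phi\,d\mu+\int\psi\,d\tilde\nu=\max_{\varphi\in\mathcal F_{c,\varepsilon}}\int_{\mathcal X}\varphi\,d\mu+\int_{\mathcal Y}\varphi^{(c,\varepsilon)}_\mu\,d\tilde\nu . \]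
   Context: $\exp_\varepsilon(t)=\exp(t/\varepsilon)$. $L^{\exp}_\varepsilon(\mu)$ is the set of measurable $\phi:\mathcal X\to[-\infty,\infty)$ with $0<\int\exp_\varepsilon(\phi)\,d\mu<\infty$ (analogously on $\mathcal Y$). $(\psi_0)^{(c,\varepsilon)}_\nu(x)=-\varepsilon\log\int\exp_\varepsilon(\psi_0(y)-c(x,y))\,d\nu(y)$ and $\phi^{(c,\varepsilon)}_\mu(y)=-\varepsilon\log\int\exp_\varepsilon(\phi(x)-c(x,y))\,d\mu(x)$. $D_{\mu,\nu}(\phi,\psi)=\int\phi\,d\mu+\int\psi\,d\nu-\varepsilon\int\exp_\varepsilon(\phi(x)+\psi(y)-c(x,y))\,d(\mu\otimes\nu)(x,y)+\varepsilon$. $\mathrm{OT}_{c,\varepsilon}(\mu,\nu)=\inf_{\pi\in\Pi(\mu,\nu)}\int c\,d\pi+\varepsilon\,\mathrm{KL}(\pi\mid\mu\otimes\nu)$. $\mathcal F_{c,\varepsilon}=\bigcup_{\xi\in\mathcal P(\mathcal Y)}\{\varphi:\mathcal X\to\mathbb R\mid\exists\,\psi':\mathcal Y\to\mathbb R\text{ measurable},\ \varphi=\psi'^{(c,\varepsilon)}_\xi,\ \|\varphi\|_\infty,\|\psi'\|_\infty\le3/2\}$. *)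

theory Defs
  imports "HOL-Probability.Probability"
begin

text \<open>exp_eps(t) = exp(t/eps), extended to [-infinity, infinity) with exp_eps(-infinity) = 0
  (the value at +infinity is irrelevant: functions in L^exp never take it).\<close>
definition exp_eps :: "real \<Rightarrow> ereal \<Rightarrow> ennreal" where
  "exp_eps \<epsilon> t = (case t of ereal r \<Rightarrow> ennreal (exp (r / \<epsilon>)) | PInfty \<Rightarrow> \<infinity> | MInfty \<Rightarrow> 0)"

definition Lexp :: "real \<Rightarrow> 'a measure \<Rightarrow> ('a \<Rightarrow> ereal) set" where
  "Lexp \<epsilon> M = {f. f \<in> borel_measurable M \<and> (\<forall>x\<in>space M. f x \<noteq> \<infinity>)
       \<and> 0 < (\<integral>\<^sup>+ x. exp_eps \<epsilon> (f x) \<partial>M) \<and> (\<integral>\<^sup>+ x. exp_eps \<epsilon> (f x) \<partial>M) < \<infinity>}"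

definition eint :: "'a measure \<Rightarrow> ('a \<Rightarrow> ereal) \<Rightarrow> ereal" where
  "eint M f = enn2ereal (\<integral>\<^sup>+ x. e2ennreal (f x) \<partial>M) - enn2ereal (\<integral>\<^sup>+ x. e2ennreal (- f x) \<partial>M)"

definition ctransX :: "real \<Rightarrow> ('x \<Rightarrow> 'y \<Rightarrow> real) \<Rightarrow> 'y measure \<Rightarrow> ('y \<Rightarrow> ereal) \<Rightarrow> 'x \<Rightarrow> real" where
  "ctransX \<epsilon> c \<nu> \<psi> x = - \<epsilon> * ln (enn2real (\<integral>\<^sup>+ y. exp_eps \<epsilon> (\<psi> y - ereal (c x y)) \<partial>\<nu>))"

definition ctransY :: "real \<Rightarrow> ('x \<Rightarrow> 'y \<Rightarrow> real) \<Rightarrow> 'x measure \<Rightarrow> ('x \<Rightarrow> ereal) \<Rightarrow> 'y \<Rightarrow> real" where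
  "ctransY \<epsilon> c \<mu> \<phi> y = - \<epsilon> * ln (enn2real (\<integral>\<^sup>+ x. exp_eps \<epsilon> (\<phi> x - ereal (c x y)) \<partial>\<mu>))"

definition Dual :: "real \<Rightarrow> ('x \<Rightarrow> 'y \<Rightarrow> real) \<Rightarrow> 'x measure \<Rightarrow> 'y measure
    \<Rightarrow> ('x \<Rightarrow> ereal) \<Rightarrow> ('y \<Rightarrow> ereal) \<Rightarrow> ereal" where
  "Dual \<epsilon> c \<mu> \<nu> \<phi> \<psi> = eint \<mu> \<phi> + eint \<nu> \<psi>
     - ereal \<epsilon> * enn2ereal (\<integral>\<^sup>+ z. exp_eps \<epsilon> (\<phi> (fst z) + \<psi> (snd z) - ereal (c (fst z) (snd z))) \<partial>(\<mu> \<Otimes>\<^sub>M \<nu>))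
     + ereal \<epsilon>"

definition couplings :: "'x measure \<Rightarrow> 'y measure \<Rightarrow> ('x \<times> 'y) measure set" where
  "couplings \<mu> \<nu> = {\<pi>. sets \<pi> = sets (\<mu> \<Otimes>\<^sub>M \<nu>) \<and> prob_space \<pi>
      \<and> distr \<pi> \<mu> fst = \<mu> \<and> distr \<pi> \<nu> snd = \<nu>}"

definition KLdiv :: "'a measure \<Rightarrow> 'a measure \<Rightarrow> ereal" where
  "KLdiv \<pi> \<rho> = (if absolutely_continuous \<rho> \<pi>
      then eint \<pi> (\<lambda>z. ereal (ln (enn2real (RN_deriv \<rho> \<pi> z)))) else \<infinity>)"

definition OT :: "real \<Rightarrow> ('x \<Rightarrow> 'y \<Rightarrow> real) \<Rightarrow> 'x measure \<Rightarrow> 'y measure \<Rightarrow> ereal" where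
  "OT \<epsilon> c \<mu> \<nu> = (INF \<pi> \<in> couplings \<mu> \<nu>.
      ereal (\<integral> z. c (fst z) (snd z) \<partial>\<pi>) + ereal \<epsilon> * KLdiv \<pi> (\<mu> \<Otimes>\<^sub>M \<nu>))"

definition Fce :: "real \<Rightarrow> ('x \<Rightarrow> 'y::topological_space \<Rightarrow> real) \<Rightarrow> ('x \<Rightarrow> real) set" where
  "Fce \<epsilon> c = {\<phi>. \<exists>\<xi> \<psi>'. prob_space \<xi> \<and> sets \<xi> = sets (borel :: 'y measure)
      \<and> \<psi>' \<in> borel_measurable (borel :: 'y measure)
      \<and> \<phi> = ctransX \<epsilon> c \<xi> (\<lambda>y. ereal (\<psi>' y))
      \<and> (\<forall>x. \<bar>\<phi> x\<bar> \<le> 3/2) \<and> (\<forall>y. \<bar>\<psi>' y\<bar> \<le> 3/2)}"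

end

theory Submission
  imports Defs
begin


lemma exp_eps_ereal[simp]: "exp_eps e (ereal r) = ennreal (exp (r / e))"
  by (simp add: exp_eps_def)

lemma exp_eps_PInf[simp]: "exp_eps e \<infinity> = \<infinity>" and exp_eps_MInf[simp]: "exp_eps e (-\<infinity>) = 0"
  by (simp_all add: exp_eps_def)

lemma exp_eps_minus: "exp_eps e (t - ereal r) = exp_eps e t * ennreal (exp (- r / e))"
proof (cases t)
  case (real a)
  then show ?thesis
    by (simp add: ennreal_mult'[symmetric] exp_add[symmetric] diff_divide_distrib)
qed (auto simp: ennreal_top_mult)

lemma exp_eps_plus: "exp_eps e (ereal r + t) = ennreal (exp (r / e)) * exp_eps e t"
proof (cases t)
  case (real a)
  then show ?thesis
    by (simp add: ennreal_mult'[symmetric] exp_add[symmetric] add_divide_distrib)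
qed (auto simp: ennreal_mult_top)

lemma exp_eps_measurable[measurable]:
  assumes [measurable]: "f \<in> borel_measurable M"
  shows "(\<lambda>x. exp_eps e (f x)) \<in> borel_measurable M"
proof -
  have "(\<lambda>x. exp_eps e (f x)) = (\<lambda>x. if f x = \<infinity> then \<infinity> else if f x = -\<infinity> then 0
            else ennreal (exp (real_of_ereal (f x) / e)))"
    by (rule ext) (auto simp: exp_eps_def split: ereal.split)
  also have "\<dots> \<in> borel_measurable M" by measurable
  finally show ?thesis .
qed

lemma e2ennreal_le_exp_eps:
  assumes e: "e > 0" shows "e2ennreal t \<le> ennreal e * exp_eps e t"
proof (cases t)
  case (real r)
  have "r / e + 1 \<le> exp (r / e)" using exp_ge_add_one_self[of "r/e"] by linarith
  hence "r \<le> e * exp (r / e)" using e by (simp add: field_simps)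
  then show ?thesis using real e by (simp add: ennreal_mult'[symmetric] ennreal_leI)
qed (use e in \<open>auto simp: e2ennreal_neg ennreal_mult_top\<close>)

lemma ctrans_basic:
  assumes e: "e > 0" and f: "f \<in> Lexp e M" and k: "\<And>a y. \<bar>k a y\<bar> \<le> 1"
  shows "ennreal (exp (- ctransX e k M f a / e)) = (\<integral>\<^sup>+ y. exp_eps e (f y - ereal (k a y)) \<partial>M)"
    and "\<bar>ctransX e k M f a + e * ln (enn2real (\<integral>\<^sup>+ y. exp_eps e (f y) \<partial>M))\<bar> \<le> 1"
proof -
  define I where "I = (\<integral>\<^sup>+ y. exp_eps e (f y) \<partial>M)"
  from f have fm: "f \<in> borel_measurable M" and I0: "0 < I" and Ifin: "I < \<infinity>"
    by (auto simp: Lexp_def I_def)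
  define Q where "Q = (\<integral>\<^sup>+ y. exp_eps e (f y - ereal (k a y)) \<partial>M)"
  have Qeq: "Q = (\<integral>\<^sup>+ y. exp_eps e (f y) * ennreal (exp (- k a y / e)) \<partial>M)"
    by (simp add: Q_def exp_eps_minus)
  have b1: "exp (- k a y / e) \<le> exp (1/e)" for y
  proof -
    have "- k a y \<le> 1" using k[of a y] by auto
    hence "- k a y / e \<le> 1 / e" using e by (rule divide_right_mono[OF _ less_imp_le])
    thus ?thesis by simp
  qed
  have b2: "exp (-1/e) \<le> exp (- k a y / e)" for y
  proof -
    have "-1 \<le> - k a y" using k[of a y] by auto
    hence "-1 / e \<le> - k a y / e" using e by (rule divide_right_mono[OF _ less_imp_le])
    thus ?thesis by simp
  qed
  have "Q \<le> (\<integral>\<^sup>+ y. exp_eps e (f y) * ennreal (exp (1/e)) \<partial>M)"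
    unfolding Qeq by (intro nn_integral_mono mult_left_mono ennreal_leI b1) auto
  also have "\<dots> = I * ennreal (exp (1/e))" using nn_integral_multc[OF exp_eps_measurable[OF fm]] by (simp add: I_def)
  finally have Qup: "Q \<le> I * ennreal (exp (1/e))" .
  have "I * ennreal (exp (-1/e)) = (\<integral>\<^sup>+ y. exp_eps e (f y) * ennreal (exp (-1/e)) \<partial>M)"
    using nn_integral_multc[OF exp_eps_measurable[OF fm]] by (simp add: I_def)
  also have "\<dots> \<le> Q"
    unfolding Qeq by (intro nn_integral_mono mult_left_mono ennreal_leI b2) auto
  finally have Qlow: "I * ennreal (exp (-1/e)) \<le> Q" .
  obtain i where i: "I = ennreal i" "0 \<le> i" using Ifin by (cases I) auto
  with I0 have ipos: "i > 0" by auto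
  have "Q < \<infinity>" using Qup i by (auto simp: ennreal_mult'[symmetric] ennreal_less_top intro: le_less_trans)
  then obtain q where q: "Q = ennreal q" "0 \<le> q" by (cases Q) auto
  have qup: "q \<le> i * exp (1/e)" using Qup q i by (simp add: ennreal_mult'[symmetric] ennreal_le_iff)
  have ie: "i * exp (-1/e) > 0" using ipos by simp
  have qlow: "i * exp (-1/e) \<le> q" using Qlow q i ie
    by (simp add: ennreal_mult'[symmetric] ennreal_le_iff2)
  have qpos: "q > 0" using qlow ipos by (smt (verit) exp_gt_zero mult_pos_pos)
  have ct: "ctransX e k M f a = - e * ln q" by (simp add: ctransX_def Q_def[symmetric] q)
  show "ennreal (exp (- ctransX e k M f a / e)) = (\<integral>\<^sup>+ y. exp_eps e (f y - ereal (k a y)) \<partial>M)"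
    using e qpos by (simp add: ct Q_def[symmetric] q)
  have l1: "ln q - ln i \<le> 1/e"
  proof -
    have "ln q \<le> ln (i * exp (1/e))" using qup qpos ipos by simp
    thus ?thesis using ipos by (simp add: ln_mult)
  qed
  have l2: "-(1/e) \<le> ln q - ln i"
  proof -
    have "ln (i * exp (-1/e)) \<le> ln q" by (rule iffD2[OF ln_le_cancel_iff[OF ie qpos] qlow])
    thus ?thesis using ipos by (simp add: ln_mult)
  qed
  have m1: "e * (ln q - ln i) \<le> 1" using mult_left_mono[OF l1, of e] e by simp
  have m2: "-1 \<le> e * (ln q - ln i)" using mult_left_mono[OF l2, of e] e by simp
  have "enn2real I = i" using i by simp
  then have "ctransX e k M f a + e * ln (enn2real I) = - (e * (ln q - ln i))"
    unfolding ct by (simp add: algebra_simps)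
  then show "\<bar>ctransX e k M f a + e * ln (enn2real (\<integral>\<^sup>+ y. exp_eps e (f y) \<partial>M))\<bar> \<le> 1"
    using m1 m2 unfolding I_def by linarith
qed



lemma Lexp_bounded:
  assumes e: "e > 0" and M: "prob_space M" and fm: "f \<in> borel_measurable M" and B: "\<And>x. \<bar>f x\<bar> \<le> B"
  shows "(\<lambda>x. ereal (f x)) \<in> Lexp e M"
proof -
  interpret prob_space M by fact
  have lo: "exp (-B/e) \<le> exp (f x / e)" for x
  proof -
    have "-B \<le> f x" using B[of x] by auto
    hence "-B/e \<le> f x / e" using e by (rule divide_right_mono[OF _ less_imp_le])
    thus ?thesis by simp
  qed
  have hi: "exp (f x / e) \<le> exp (B/e)" for x
  proof -
    have "f x \<le> B" using B[of x] by auto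
    hence "f x / e \<le> B/e" using e by (rule divide_right_mono[OF _ less_imp_le])
    thus ?thesis by simp
  qed
  have "0 < ennreal (exp (-B/e))" by simp
  also have "ennreal (exp (-B/e)) = (\<integral>\<^sup>+ x. ennreal (exp (-B/e)) \<partial>M)"
    by (simp add: emeasure_space_1)
  also have "\<dots> \<le> (\<integral>\<^sup>+ x. ennreal (exp (f x / e)) \<partial>M)"
    by (intro nn_integral_mono ennreal_leI lo)
  finally have p: "0 < (\<integral>\<^sup>+ x. ennreal (exp (f x / e)) \<partial>M)" .
  have "(\<integral>\<^sup>+ x. ennreal (exp (f x / e)) \<partial>M) \<le> (\<integral>\<^sup>+ x. ennreal (exp (B/e)) \<partial>M)"
    by (intro nn_integral_mono ennreal_leI hi)
  also have "\<dots> = ennreal (exp (B/e))" by (simp add: emeasure_space_1)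
  also have "\<dots> < \<infinity>" by simp
  finally have q: "(\<integral>\<^sup>+ x. ennreal (exp (f x / e)) \<partial>M) < \<infinity>" .
  show ?thesis using p q fm by (simp add: Lexp_def)
qed

lemma eint_cong_AE:
  assumes "AE x in M. f x = g x" shows "eint M f = eint M g"
proof -
  have "(\<integral>\<^sup>+ x. e2ennreal (f x) \<partial>M) = (\<integral>\<^sup>+ x. e2ennreal (g x) \<partial>M)"
    by (rule nn_integral_cong_AE) (use assms in auto)
  moreover have "(\<integral>\<^sup>+ x. e2ennreal (- f x) \<partial>M) = (\<integral>\<^sup>+ x. e2ennreal (- g x) \<partial>M)"
    by (rule nn_integral_cong_AE) (use assms in auto)
  ultimately show ?thesis by (simp add: eint_def)
qed

lemma eint_integrable:
  fixes f :: "'a \<Rightarrow> real"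
  assumes f: "integrable M f"
  shows "eint M (\<lambda>x. ereal (f x)) = ereal (integral\<^sup>L M f)"
proof -
  have fm: "f \<in> borel_measurable M" using f by auto
  have nf: "(\<integral>\<^sup>+ x. ennreal (norm (f x)) \<partial>M) < \<infinity>" using f by (simp add: integrable_iff_bounded)
  have P: "(\<integral>\<^sup>+ x. ennreal (f x) \<partial>M) < \<infinity>"
    by (rule le_less_trans[OF nn_integral_mono nf]) (auto intro: ennreal_leI)
  have N: "(\<integral>\<^sup>+ x. ennreal (- f x) \<partial>M) < \<infinity>"
    by (rule le_less_trans[OF nn_integral_mono nf]) (auto intro: ennreal_leI)
  obtain p where p: "(\<integral>\<^sup>+ x. ennreal (f x) \<partial>M) = ennreal p" "0 \<le> p" using P by (cases "(\<integral>\<^sup>+ x. ennreal (f x) \<partial>M)") auto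
  obtain n where n: "(\<integral>\<^sup>+ x. ennreal (- f x) \<partial>M) = ennreal n" "0 \<le> n" using N by (cases "(\<integral>\<^sup>+ x. ennreal (- f x) \<partial>M)") auto
  have "integral\<^sup>L M f = p - n" using real_lebesgue_integral_def[OF f] p n by simp
  moreover have "eint M (\<lambda>x. ereal (f x)) = ereal p - ereal n"
    unfolding eint_def using p n by simp
  ultimately show ?thesis by simp
qed

lemma Lexp_pos_finite:
  assumes e: "e > 0" and f: "f \<in> Lexp e M"
  shows "(\<integral>\<^sup>+ x. e2ennreal (f x) \<partial>M) < \<infinity>"
proof -
  have fm: "f \<in> borel_measurable M" and I: "(\<integral>\<^sup>+ x. exp_eps e (f x) \<partial>M) < \<infinity>"
    using f by (auto simp: Lexp_def)
  have "(\<integral>\<^sup>+ x. e2ennreal (f x) \<partial>M) \<le> (\<integral>\<^sup>+ x. ennreal e * exp_eps e (f x) \<partial>M)"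
    by (intro nn_integral_mono e2ennreal_le_exp_eps e)
  also have "\<dots> = ennreal e * (\<integral>\<^sup>+ x. exp_eps e (f x) \<partial>M)"
    by (rule nn_integral_cmult) (rule exp_eps_measurable[OF fm])
  also have "\<dots> < \<infinity>" using I by (simp add: ennreal_mult_less_top)
  finally show ?thesis .
qed

lemma eint_finite:
  fixes f :: "'a \<Rightarrow> ereal"
  assumes fm[measurable]: "f \<in> borel_measurable M"
    and P: "(\<integral>\<^sup>+ x. e2ennreal (f x) \<partial>M) < \<infinity>" and N: "(\<integral>\<^sup>+ x. e2ennreal (- f x) \<partial>M) < \<infinity>"
  shows "integrable M (\<lambda>x. real_of_ereal (f x))"
    and "AE x in M. f x = ereal (real_of_ereal (f x))"
    and "eint M f = ereal (\<integral>x. real_of_ereal (f x) \<partial>M)"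
proof -
  have a1: "AE x in M. e2ennreal (f x) \<noteq> \<infinity>"
    by (rule nn_integral_PInf_AE) (use P in auto)
  have a2: "AE x in M. e2ennreal (- f x) \<noteq> \<infinity>"
    by (rule nn_integral_PInf_AE) (use N in auto)
  show ae: "AE x in M. f x = ereal (real_of_ereal (f x))"
    using a1 a2
  proof eventually_elim
    case (elim x) then show ?case by (cases "f x") auto
  qed
  define r where "r x = real_of_ereal (f x)" for x
  have rm[measurable]: "r \<in> borel_measurable M" unfolding r_def by measurable
  have e1: "(\<integral>\<^sup>+ x. ennreal (r x) \<partial>M) = (\<integral>\<^sup>+ x. e2ennreal (f x) \<partial>M)"
    by (rule nn_integral_cong_AE) (use ae in \<open>auto simp: r_def elim!: eventually_mono\<close>, metis e2ennreal_ereal)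
  have e2: "(\<integral>\<^sup>+ x. ennreal (- r x) \<partial>M) = (\<integral>\<^sup>+ x. e2ennreal (- f x) \<partial>M)"
  proof (rule nn_integral_cong_AE)
    show "AE x in M. ennreal (- r x) = e2ennreal (- f x)"
      using ae by (auto simp: r_def elim!: eventually_mono) (metis e2ennreal_ereal uminus_ereal.simps(1))
  qed
  have "(\<integral>\<^sup>+ x. ennreal (norm (r x)) \<partial>M) = (\<integral>\<^sup>+ x. ennreal (r x) + ennreal (- r x) \<partial>M)"
    by (intro nn_integral_cong) (auto simp: abs_real_def ennreal_neg)
  also have "\<dots> = (\<integral>\<^sup>+ x. ennreal (r x) \<partial>M) + (\<integral>\<^sup>+ x. ennreal (- r x) \<partial>M)"
    by (rule nn_integral_add) auto
  also have "\<dots> < \<infinity>" using P N e1 e2 by simp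
  finally show int: "integrable M (\<lambda>x. real_of_ereal (f x))"
    by (simp add: integrable_iff_bounded r_def[symmetric])
  have "eint M f = eint M (\<lambda>x. ereal (real_of_ereal (f x)))"
    by (rule eint_cong_AE[OF ae])
  also have "\<dots> = ereal (\<integral>x. real_of_ereal (f x) \<partial>M)" by (rule eint_integrable[OF int])
  finally show "eint M f = ereal (\<integral>x. real_of_ereal (f x) \<partial>M)" .
qed

lemma ctrans_meas:
  assumes k[measurable]: "(\<lambda>(a,b). k a b) \<in> borel_measurable (A \<Otimes>\<^sub>M M)"
    and f[measurable]: "f \<in> borel_measurable M" and M: "sigma_finite_measure M"
  shows "ctransX e k M f \<in> borel_measurable A"
proof -
  interpret sigma_finite_measure M by fact
  have "(\<lambda>a. \<integral>\<^sup>+ y. exp_eps e (f y - ereal (k a y)) \<partial>M) \<in> borel_measurable A"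
    by measurable
  then show ?thesis unfolding ctransX_def[abs_def] by measurable
qed

lemma ctransY_eq: "ctransY e c M g = ctransX e (\<lambda>y x. c x y) M g"
  by (simp add: ctransX_def[abs_def] ctransY_def[abs_def])



lemma coupling_fst:
  assumes "\<pi> \<in> couplings M N"
  shows "fst \<in> measurable \<pi> M" "distr \<pi> M fst = M"
proof -
  have s: "sets \<pi> = sets (M \<Otimes>\<^sub>M N)" using assms by (simp add: couplings_def)
  show m: "fst \<in> measurable \<pi> M" by (subst measurable_cong_sets[OF s refl]) (rule measurable_fst)
  show "distr \<pi> M fst = M" using assms by (simp add: couplings_def)
qed

lemma coupling_snd:
  assumes "\<pi> \<in> couplings M N"
  shows "snd \<in> measurable \<pi> N" "distr \<pi> N snd = N"
proof -
  have s: "sets \<pi> = sets (M \<Otimes>\<^sub>M N)" using assms by (simp add: couplings_def)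
  show m: "snd \<in> measurable \<pi> N" by (subst measurable_cong_sets[OF s refl]) (rule measurable_snd)
  show "distr \<pi> N snd = N" using assms by (simp add: couplings_def)
qed

lemma coupling_integral_fst:
  fixes f :: "'a \<Rightarrow> real"
  assumes "\<pi> \<in> couplings M N" "integrable M f"
  shows "integrable \<pi> (\<lambda>z. f (fst z))" "(\<integral>z. f (fst z) \<partial>\<pi>) = (\<integral>x. f x \<partial>M)"
proof -
  note m = coupling_fst[OF assms(1)]
  have fm: "f \<in> borel_measurable M" using assms by auto
  show "integrable \<pi> (\<lambda>z. f (fst z))"
    using integrable_distr_eq[OF m(1) fm] m(2) assms(2) by simp
  show "(\<integral>z. f (fst z) \<partial>\<pi>) = (\<integral>x. f x \<partial>M)"
    using integral_distr[OF m(1) fm] m(2) by simp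
qed

lemma coupling_integral_snd:
  fixes f :: "'b \<Rightarrow> real"
  assumes "\<pi> \<in> couplings M N" "integrable N f"
  shows "integrable \<pi> (\<lambda>z. f (snd z))" "(\<integral>z. f (snd z) \<partial>\<pi>) = (\<integral>x. f x \<partial>N)"
proof -
  note m = coupling_snd[OF assms(1)]
  have fm: "f \<in> borel_measurable N" using assms by auto
  show "integrable \<pi> (\<lambda>z. f (snd z))"
    using integrable_distr_eq[OF m(1) fm] m(2) assms(2) by simp
  show "(\<integral>z. f (snd z) \<partial>\<pi>) = (\<integral>x. f x \<partial>N)"
    using integral_distr[OF m(1) fm] m(2) by simp
qed

lemma coupling_AE_fst:
  assumes "\<pi> \<in> couplings M N" "AE x in M. P x"
  shows "AE z in \<pi>. P (fst z)"
proof -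
  have "AE x in distr \<pi> M fst. P x" by (subst coupling_fst(2)[OF assms(1)]) (rule assms(2))
  then show ?thesis by (rule AE_distrD[OF coupling_fst(1)[OF assms(1)]])
qed

lemma coupling_AE_snd:
  assumes "\<pi> \<in> couplings M N" "AE x in N. P x"
  shows "AE z in \<pi>. P (snd z)"
proof -
  have "AE x in distr \<pi> N snd. P x" by (subst coupling_snd(2)[OF assms(1)]) (rule assms(2))
  then show ?thesis by (rule AE_distrD[OF coupling_snd(1)[OF assms(1)]])
qed

locale S =
  fixes c :: "'x::polish_space \<Rightarrow> 'y::polish_space \<Rightarrow> real"
    and e :: real
    and \<mu> :: "'x measure" and \<nu> :: "'y measure"
    and \<psi>\<^sub>0 :: "'y \<Rightarrow> ereal"
  assumes c_meas[measurable]: "(\<lambda>(x, y). c x y) \<in> borel_measurable (borel \<Otimes>\<^sub>M borel)"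
    and c_bdd: "\<And>x y. \<bar>c x y\<bar> \<le> 1"
    and eps_pos: "e > 0"
    and mu: "prob_space \<mu>" and mu_sets[measurable_cong]: "sets \<mu> = sets (borel :: 'x measure)"
    and nu: "prob_space \<nu>" and nu_sets[measurable_cong]: "sets \<nu> = sets (borel :: 'y measure)"
    and psi0: "\<psi>\<^sub>0 \<in> Lexp e \<nu>"
begin

lemma c_swap_meas[measurable]: "(\<lambda>(y, x). c x y) \<in> borel_measurable (borel \<Otimes>\<^sub>M borel)"
  using measurable_pair_swap[OF c_meas] by simp

lemma psi0_meas[measurable]: "\<psi>\<^sub>0 \<in> borel_measurable \<nu>"
  using psi0 by (simp add: Lexp_def)

lemma space_nu: "space \<nu> = UNIV" using sets_eq_imp_space_eq[OF nu_sets] by simp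
lemma space_mu: "space \<mu> = UNIV" using sets_eq_imp_space_eq[OF mu_sets] by simp

lemma psi0_fin: "\<psi>\<^sub>0 y \<noteq> \<infinity>"
  using psi0 space_nu by (auto simp: Lexp_def)

definition phi where "phi = ctransX e c \<nu> \<psi>\<^sub>0"
definition psi where "psi = ctransY e c \<mu> (\<lambda>x. ereal (phi x))"
definition A where "A = - e * ln (enn2real (\<integral>\<^sup>+ y. exp_eps e (\<psi>\<^sub>0 y) \<partial>\<nu>))"
definition B where "B = - e * ln (enn2real (\<integral>\<^sup>+ x. exp_eps e (ereal (phi x)) \<partial>\<mu>))"

lemma phi_exp: "ennreal (exp (- phi x / e)) = (\<integral>\<^sup>+ y. exp_eps e (\<psi>\<^sub>0 y - ereal (c x y)) \<partial>\<nu>)"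
  unfolding phi_def by (rule ctrans_basic(1)[OF eps_pos psi0 c_bdd])

lemma phi_bnd: "\<bar>phi x - A\<bar> \<le> 1"
  using ctrans_basic(2)[OF eps_pos psi0 c_bdd, where a=x] unfolding phi_def A_def by simp

lemma phi_meas[measurable]: "phi \<in> borel_measurable borel"
proof -
  have "(\<lambda>(x, y). c x y) \<in> borel_measurable (borel \<Otimes>\<^sub>M \<nu>)" by measurable
  then show ?thesis unfolding phi_def
    by (rule ctrans_meas[OF _ psi0_meas]) (simp add: nu prob_space_imp_sigma_finite)
qed

lemma phi_abs: "\<bar>phi x\<bar> \<le> \<bar>A\<bar> + 1" using phi_bnd[of x] by linarith

lemma phi_Lexp: "(\<lambda>x. ereal (phi x)) \<in> Lexp e \<mu>"
  by (rule Lexp_bounded[OF eps_pos mu _ phi_abs]) measurable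

lemma psi_exp: "ennreal (exp (- psi y / e)) = (\<integral>\<^sup>+ x. exp_eps e (ereal (phi x) - ereal (c x y)) \<partial>\<mu>)"
  unfolding psi_def ctransY_eq by (rule ctrans_basic(1)[OF eps_pos phi_Lexp c_bdd])

lemma psi_bnd: "\<bar>psi y - B\<bar> \<le> 1"
  using ctrans_basic(2)[OF eps_pos phi_Lexp, where k="\<lambda>y x. c x y" and a=y] c_bdd
  unfolding psi_def B_def ctransY_eq by simp

lemma psi_meas[measurable]: "psi \<in> borel_measurable borel"
proof -
  have "(\<lambda>(y, x). c x y) \<in> borel_measurable (borel \<Otimes>\<^sub>M \<mu>)" by measurable
  then show ?thesis unfolding psi_def ctransY_eq
    by (rule ctrans_meas) (simp_all add: mu prob_space_imp_sigma_finite)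
qed

lemma psi_abs: "\<bar>psi y\<bar> \<le> \<bar>B\<bar> + 1" using psi_bnd[of y] by linarith

lemma AB: "\<bar>A + B\<bar> \<le> 1"
proof -
  interpret prob_space \<mu> by (rule mu)
  have lo: "exp ((A - 1)/e) \<le> exp (phi x / e)" for x
  proof -
    have "A - 1 \<le> phi x" using phi_bnd[of x] by linarith
    hence "(A - 1)/e \<le> phi x / e" using eps_pos by (rule divide_right_mono[OF _ less_imp_le])
    thus ?thesis by simp
  qed
  have hi: "exp (phi x / e) \<le> exp ((A + 1)/e)" for x
  proof -
    have "phi x \<le> A + 1" using phi_bnd[of x] by linarith
    hence "phi x / e \<le> (A + 1)/e" using eps_pos by (rule divide_right_mono[OF _ less_imp_le])
    thus ?thesis by simp
  qed
  define J where "J = (\<integral>\<^sup>+ x. exp_eps e (ereal (phi x)) \<partial>\<mu>)"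
  have "J \<le> (\<integral>\<^sup>+ x. ennreal (exp ((A + 1)/e)) \<partial>\<mu>)"
    unfolding J_def exp_eps_ereal by (intro nn_integral_mono ennreal_leI hi)
  also have "\<dots> = ennreal (exp ((A + 1)/e))" by (simp add: emeasure_space_1)
  finally have J1: "J \<le> ennreal (exp ((A + 1)/e))" .
  have "ennreal (exp ((A - 1)/e)) = (\<integral>\<^sup>+ x. ennreal (exp ((A - 1)/e)) \<partial>\<mu>)"
    by (simp add: emeasure_space_1)
  also have "\<dots> \<le> J"
    unfolding J_def exp_eps_ereal by (intro nn_integral_mono ennreal_leI lo)
  finally have J2: "ennreal (exp ((A - 1)/e)) \<le> J" .
  obtain j where j: "J = ennreal j" "0 \<le> j" using J1 by (cases J) (auto simp: top_unique)
  have j1: "j \<le> exp ((A + 1)/e)" using J1 j by (simp add: ennreal_le_iff)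
  have j2: "exp ((A - 1)/e) \<le> j" using J2 j by (simp add: ennreal_le_iff2)
  have jpos: "0 < j" using j2 by (smt (verit) exp_gt_zero)
  have "ln j \<le> (A + 1)/e" using j1 jpos by (metis exp_gt_zero ln_exp ln_le_cancel_iff)
  hence u: "- e * ln j \<ge> - (A + 1)" using eps_pos by (simp add: field_simps)
  have "(A - 1)/e \<le> ln j" using j2 jpos by (metis exp_gt_zero ln_exp ln_le_cancel_iff)
  hence v: "- e * ln j \<le> - (A - 1)" using eps_pos by (simp add: field_simps)
  have "B = - e * ln j" unfolding B_def J_def[symmetric] using j by simp
  with u v show ?thesis by linarith
qed

end


lemma ee: "ennreal (exp a) * ennreal (exp b) = ennreal (exp (a + b))"
  by (simp add: ennreal_mult[symmetric] exp_add)

context S begin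

lemma e_ne: "e \<noteq> 0" using eps_pos by simp

definition Dn where "Dn y = exp_eps e (\<psi>\<^sub>0 y) * ennreal (exp (- psi y / e))"

lemma Dn_meas[measurable]: "Dn \<in> borel_measurable \<nu>"
  unfolding Dn_def[abs_def] by measurable

lemma integrand_eq1: "exp_eps e (ereal (phi x) + \<psi>\<^sub>0 y - ereal (c x y))
   = ennreal (exp (phi x / e)) * exp_eps e (\<psi>\<^sub>0 y - ereal (c x y))"
  by (simp only: exp_eps_minus exp_eps_plus mult.assoc)

lemma integrand_eq2: "exp_eps e (ereal (phi x) + \<psi>\<^sub>0 y - ereal (c x y))
   = exp_eps e (\<psi>\<^sub>0 y) * exp_eps e (ereal (phi x) - ereal (c x y))"
  by (simp only: exp_eps_minus exp_eps_plus exp_eps_ereal) (simp only: ac_simps)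

lemma D_eq: "(\<integral>\<^sup>+ x. exp_eps e (ereal (phi x) + \<psi>\<^sub>0 y - ereal (c x y)) \<partial>\<mu>) = Dn y"
proof -
  have m: "(\<lambda>x. exp_eps e (ereal (phi x) - ereal (c x y))) \<in> borel_measurable \<mu>" by measurable
  have "(\<integral>\<^sup>+ x. exp_eps e (ereal (phi x) + \<psi>\<^sub>0 y - ereal (c x y)) \<partial>\<mu>)
      = (\<integral>\<^sup>+ x. exp_eps e (\<psi>\<^sub>0 y) * exp_eps e (ereal (phi x) - ereal (c x y)) \<partial>\<mu>)"
    by (simp only: integrand_eq2)
  also have "\<dots> = exp_eps e (\<psi>\<^sub>0 y) * (\<integral>\<^sup>+ x. exp_eps e (ereal (phi x) - ereal (c x y)) \<partial>\<mu>)"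
    by (rule nn_integral_cmult[OF m])
  also have "\<dots> = Dn y" by (simp only: psi_exp[symmetric] Dn_def)
  finally show ?thesis .
qed

definition nu' where "nu' = density \<nu> (\<lambda>y. \<integral>\<^sup>+ x. exp_eps e (ereal (phi x) + \<psi>\<^sub>0 y - ereal (c x y)) \<partial>\<mu>)"

lemma nu'_eq: "nu' = density \<nu> Dn"
  unfolding nu'_def D_eq ..

lemma sets_nu'[measurable_cong]: "sets nu' = sets (borel :: 'y measure)"
  by (simp add: nu'_eq nu_sets)

lemma space_nu': "space nu' = UNIV"
  using sets_eq_imp_space_eq[OF sets_nu'] by simp

lemma exp_cancel: "ennreal (exp (a / e)) * ennreal (exp (- a / e)) = 1"
  by (simp add: ee)

lemma prob_nu': "prob_space nu'"
proof
  interpret P: pair_prob_space \<mu> \<nu> by (simp add: pair_prob_space_def pair_sigma_finite_def mu nu prob_space_imp_sigma_finite)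
  have m: "(\<lambda>(x, y). exp_eps e (ereal (phi x) + \<psi>\<^sub>0 y - ereal (c x y))) \<in> borel_measurable (\<mu> \<Otimes>\<^sub>M \<nu>)"
    by measurable
  have "emeasure nu' (space nu') = (\<integral>\<^sup>+ y. (\<integral>\<^sup>+ x. exp_eps e (ereal (phi x) + \<psi>\<^sub>0 y - ereal (c x y)) \<partial>\<mu>) \<partial>\<nu>)"
    unfolding nu'_def by (simp add: emeasure_density space_nu)
  also have "\<dots> = (\<integral>\<^sup>+ x. (\<integral>\<^sup>+ y. exp_eps e (ereal (phi x) + \<psi>\<^sub>0 y - ereal (c x y)) \<partial>\<nu>) \<partial>\<mu>)"
    by (rule P.Fubini'[OF m])
  also have "\<dots> = (\<integral>\<^sup>+ x. 1 \<partial>\<mu>)"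
  proof (rule nn_integral_cong)
    fix x
    have m2: "(\<lambda>y. exp_eps e (\<psi>\<^sub>0 y - ereal (c x y))) \<in> borel_measurable \<nu>" by measurable
    have "(\<integral>\<^sup>+ y. exp_eps e (ereal (phi x) + \<psi>\<^sub>0 y - ereal (c x y)) \<partial>\<nu>)
       = (\<integral>\<^sup>+ y. ennreal (exp (phi x / e)) * exp_eps e (\<psi>\<^sub>0 y - ereal (c x y)) \<partial>\<nu>)"
      by (simp only: integrand_eq1)
    also have "\<dots> = ennreal (exp (phi x / e)) * (\<integral>\<^sup>+ y. exp_eps e (\<psi>\<^sub>0 y - ereal (c x y)) \<partial>\<nu>)"
      by (rule nn_integral_cmult[OF m2])
    also have "\<dots> = 1" by (simp only: phi_exp[symmetric] exp_cancel)
    finally show "(\<integral>\<^sup>+ y. exp_eps e (ereal (phi x) + \<psi>\<^sub>0 y - ereal (c x y)) \<partial>\<nu>) = 1" .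
  qed
  also have "\<dots> = 1" by (simp add: P.M1.emeasure_space_1)
  finally show "emeasure nu' (space nu') = 1" .
qed

lemma psi_Lexp': "(\<lambda>y. ereal (psi y)) \<in> Lexp e nu'"
  by (rule Lexp_bounded[OF eps_pos prob_nu' _ psi_abs]) measurable

definition gg where "gg x y = exp ((phi x + psi y - c x y) / e)"

lemma gg_pos: "gg x y > 0" by (simp add: gg_def)

lemma gg_meas[measurable]: "(\<lambda>z. gg (fst z) (snd z)) \<in> borel_measurable (\<mu> \<Otimes>\<^sub>M nu')"
  unfolding gg_def by measurable

lemma row: "(\<integral>\<^sup>+ y. ennreal (gg x y) \<partial>nu') = 1"
proof -
  have m2: "(\<lambda>y. exp_eps e (\<psi>\<^sub>0 y - ereal (c x y))) \<in> borel_measurable \<nu>" by measurable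
  have pw: "Dn y * ennreal (gg x y) = ennreal (exp (phi x / e)) * exp_eps e (\<psi>\<^sub>0 y - ereal (c x y))" for y
  proof -
    have arg: "- psi y / e + (phi x + psi y - c x y) / e = phi x / e + - c x y / e"
      using e_ne by (simp add: field_simps)
    have "Dn y * ennreal (gg x y) = exp_eps e (\<psi>\<^sub>0 y) * (ennreal (exp (- psi y / e)) * ennreal (gg x y))"
      by (simp add: Dn_def mult.assoc)
    also have "\<dots> = exp_eps e (\<psi>\<^sub>0 y) * ennreal (exp (phi x / e + - c x y / e))"
      by (simp only: gg_def ee arg)
    also have "\<dots> = ennreal (exp (phi x / e)) * (exp_eps e (\<psi>\<^sub>0 y) * ennreal (exp (- c x y / e)))"
      by (simp only: ee[symmetric] ac_simps)
    also have "\<dots> = ennreal (exp (phi x / e)) * exp_eps e (\<psi>\<^sub>0 y - ereal (c x y))"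
      by (simp only: exp_eps_minus)
    finally show ?thesis .
  qed
  have "(\<integral>\<^sup>+ y. ennreal (gg x y) \<partial>nu') = (\<integral>\<^sup>+ y. Dn y * ennreal (gg x y) \<partial>\<nu>)"
    unfolding nu'_eq by (rule nn_integral_density) (measurable, simp add: gg_def)
  also have "\<dots> = (\<integral>\<^sup>+ y. ennreal (exp (phi x / e)) * exp_eps e (\<psi>\<^sub>0 y - ereal (c x y)) \<partial>\<nu>)"
    by (simp only: pw)
  also have "\<dots> = ennreal (exp (phi x / e)) * (\<integral>\<^sup>+ y. exp_eps e (\<psi>\<^sub>0 y - ereal (c x y)) \<partial>\<nu>)"
    by (rule nn_integral_cmult[OF m2])
  also have "\<dots> = 1" by (simp only: phi_exp[symmetric] exp_cancel)
  finally show ?thesis .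
qed

lemma col: "(\<integral>\<^sup>+ x. ennreal (gg x y) \<partial>\<mu>) = 1"
proof -
  have m2: "(\<lambda>x. exp_eps e (ereal (phi x) - ereal (c x y))) \<in> borel_measurable \<mu>" by measurable
  have pw: "ennreal (gg x y) = ennreal (exp (psi y / e)) * exp_eps e (ereal (phi x) - ereal (c x y))" for x
  proof -
    have arg: "(phi x + psi y - c x y) / e = psi y / e + (phi x - c x y) / e"
      using e_ne by (simp add: field_simps)
    show ?thesis by (simp only: gg_def arg ee[symmetric] ereal_minus exp_eps_ereal)
  qed
  have "(\<integral>\<^sup>+ x. ennreal (gg x y) \<partial>\<mu>) = (\<integral>\<^sup>+ x. ennreal (exp (psi y / e)) * exp_eps e (ereal (phi x) - ereal (c x y)) \<partial>\<mu>)"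
    by (simp only: pw)
  also have "\<dots> = ennreal (exp (psi y / e)) * (\<integral>\<^sup>+ x. exp_eps e (ereal (phi x) - ereal (c x y)) \<partial>\<mu>)"
    by (rule nn_integral_cmult[OF m2])
  also have "\<dots> = 1" by (simp only: psi_exp[symmetric] exp_cancel)
  finally show ?thesis .
qed

end


lemma integrable_bdd:
  fixes f :: "'a \<Rightarrow> real"
  assumes "prob_space M" "f \<in> borel_measurable M" "\<And>x. \<bar>f x\<bar> \<le> K"
  shows "integrable M f"
proof -
  interpret prob_space M by fact
  show ?thesis by (rule integrable_const_bound[where B=K]) (use assms in auto)
qed

context S begin

lemma pps: "pair_prob_space \<mu> nu'"
  by (simp add: pair_prob_space_def pair_sigma_finite_def mu prob_nu' prob_space_imp_sigma_finite)

definition pistar where "pistar = density (\<mu> \<Otimes>\<^sub>M nu') (\<lambda>z. ennreal (gg (fst z) (snd z)))"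

lemma sets_pistar[measurable_cong]: "sets pistar = sets (\<mu> \<Otimes>\<^sub>M nu')" by (simp add: pistar_def)

lemma gg_meas2[measurable]: "(\<lambda>z. ennreal (gg (fst z) (snd z))) \<in> borel_measurable (\<mu> \<Otimes>\<^sub>M nu')"
  unfolding gg_def by measurable

lemma marg_fst:
  assumes [measurable]: "h \<in> borel_measurable \<mu>"
  shows "(\<integral>\<^sup>+ z. h (fst z) \<partial>pistar) = (\<integral>\<^sup>+ x. h x \<partial>\<mu>)"
proof -
  interpret Q: pair_prob_space \<mu> nu' by (rule pps)
  have "(\<integral>\<^sup>+ z. h (fst z) \<partial>pistar) = (\<integral>\<^sup>+ z. ennreal (gg (fst z) (snd z)) * h (fst z) \<partial>(\<mu> \<Otimes>\<^sub>M nu'))"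
    unfolding pistar_def by (rule nn_integral_density[OF gg_meas2 measurable_compose[OF measurable_fst assms]])
  also have "\<dots> = (\<integral>\<^sup>+ x. \<integral>\<^sup>+ y. ennreal (gg x y) * h x \<partial>nu' \<partial>\<mu>)"
  proof -
    have mm: "(\<lambda>z. ennreal (gg (fst z) (snd z)) * h (fst z)) \<in> borel_measurable (\<mu> \<Otimes>\<^sub>M nu')"
      by measurable
    show ?thesis by (subst Q.M2.nn_integral_fst[symmetric, OF mm]) simp
  qed
  also have "\<dots> = (\<integral>\<^sup>+ x. (\<integral>\<^sup>+ y. ennreal (gg x y) \<partial>nu') * h x \<partial>\<mu>)"
  proof (rule nn_integral_cong)
    fix x
    have "(\<lambda>y. ennreal (gg x y)) \<in> borel_measurable nu'" unfolding gg_def by measurable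
    then show "(\<integral>\<^sup>+ y. ennreal (gg x y) * h x \<partial>nu') = (\<integral>\<^sup>+ y. ennreal (gg x y) \<partial>nu') * h x"
      by (rule nn_integral_multc)
  qed
  also have "\<dots> = (\<integral>\<^sup>+ x. h x \<partial>\<mu>)" by (simp only: row mult_1)
  finally show ?thesis .
qed

lemma marg_snd:
  assumes [measurable]: "h \<in> borel_measurable nu'"
  shows "(\<integral>\<^sup>+ z. h (snd z) \<partial>pistar) = (\<integral>\<^sup>+ y. h y \<partial>nu')"
proof -
  interpret Q: pair_prob_space \<mu> nu' by (rule pps)
  have "(\<integral>\<^sup>+ z. h (snd z) \<partial>pistar) = (\<integral>\<^sup>+ z. ennreal (gg (fst z) (snd z)) * h (snd z) \<partial>(\<mu> \<Otimes>\<^sub>M nu'))"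
    unfolding pistar_def by (rule nn_integral_density[OF gg_meas2 measurable_compose[OF measurable_snd assms]])
  also have "\<dots> = (\<integral>\<^sup>+ y. \<integral>\<^sup>+ x. ennreal (gg x y) * h y \<partial>\<mu> \<partial>nu')"
  proof -
    have mm: "(\<lambda>z. ennreal (gg (fst z) (snd z)) * h (snd z)) \<in> borel_measurable (\<mu> \<Otimes>\<^sub>M nu')"
      by measurable
    show ?thesis by (subst Q.nn_integral_snd[symmetric, OF mm]) simp
  qed
  also have "\<dots> = (\<integral>\<^sup>+ y. (\<integral>\<^sup>+ x. ennreal (gg x y) \<partial>\<mu>) * h y \<partial>nu')"
  proof (rule nn_integral_cong)
    fix y
    have "(\<lambda>x. ennreal (gg x y)) \<in> borel_measurable \<mu>" unfolding gg_def by measurable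
    then show "(\<integral>\<^sup>+ x. ennreal (gg x y) * h y \<partial>\<mu>) = (\<integral>\<^sup>+ x. ennreal (gg x y) \<partial>\<mu>) * h y"
      by (rule nn_integral_multc)
  qed
  also have "\<dots> = (\<integral>\<^sup>+ y. h y \<partial>nu')" by (simp only: col mult_1)
  finally show ?thesis .
qed

lemma pistar_coupling: "pistar \<in> couplings \<mu> nu'"
proof -
  have sp: "space pistar = UNIV" using sets_eq_imp_space_eq[OF sets_pistar] space_mu space_nu'
    by (simp add: space_pair_measure)
  have prob: "prob_space pistar"
  proof
    have "emeasure pistar (space pistar) = (\<integral>\<^sup>+ z. 1 \<partial>pistar)" by simp
    also have "\<dots> = (\<integral>\<^sup>+ x. 1 \<partial>\<mu>)" using marg_fst[of "\<lambda>_. 1"] by simp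
    also have "\<dots> = 1" using prob_space.emeasure_space_1[OF mu] by simp
    finally show "emeasure pistar (space pistar) = 1" .
  qed
  have fm: "fst \<in> measurable pistar \<mu>" by measurable
  have sm: "snd \<in> measurable pistar nu'" by measurable
  have d1: "distr pistar \<mu> fst = \<mu>"
  proof (rule measure_eqI)
    show "sets (distr pistar \<mu> fst) = sets \<mu>" by simp
    fix X assume "X \<in> sets (distr pistar \<mu> fst)"
    hence X[measurable]: "X \<in> sets \<mu>" by simp
    have "emeasure (distr pistar \<mu> fst) X = emeasure pistar (fst -` X \<inter> space pistar)"
      by (rule emeasure_distr[OF fm X])
    also have "\<dots> = (\<integral>\<^sup>+ z. indicator (fst -` X \<inter> space pistar) z \<partial>pistar)"
      by (rule nn_integral_indicator[symmetric]) (measurable)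
    also have "\<dots> = (\<integral>\<^sup>+ z. indicator X (fst z) \<partial>pistar)"
      by (intro nn_integral_cong) (simp add: sp indicator_def)
    also have "\<dots> = (\<integral>\<^sup>+ x. indicator X x \<partial>\<mu>)" by (rule marg_fst) measurable
    also have "\<dots> = emeasure \<mu> X" by simp
    finally show "emeasure (distr pistar \<mu> fst) X = emeasure \<mu> X" .
  qed
  have d2: "distr pistar nu' snd = nu'"
  proof (rule measure_eqI)
    show "sets (distr pistar nu' snd) = sets nu'" by simp
    fix X assume "X \<in> sets (distr pistar nu' snd)"
    hence X[measurable]: "X \<in> sets nu'" by simp
    have "emeasure (distr pistar nu' snd) X = emeasure pistar (snd -` X \<inter> space pistar)"
      by (rule emeasure_distr[OF sm X])
    also have "\<dots> = (\<integral>\<^sup>+ z. indicator (snd -` X \<inter> space pistar) z \<partial>pistar)"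
      by (rule nn_integral_indicator[symmetric]) (measurable)
    also have "\<dots> = (\<integral>\<^sup>+ z. indicator X (snd z) \<partial>pistar)"
      by (intro nn_integral_cong) (simp add: sp indicator_def)
    also have "\<dots> = (\<integral>\<^sup>+ y. indicator X y \<partial>nu')" by (rule marg_snd) measurable
    also have "\<dots> = emeasure nu' X" by simp
    finally show "emeasure (distr pistar nu' snd) X = emeasure nu' X" .
  qed
  show ?thesis using prob d1 d2 sets_pistar by (simp add: couplings_def)
qed

lemma Dual_semi:
  fixes \<phi>1 :: "'x \<Rightarrow> real"
  assumes m1[measurable]: "\<phi>1 \<in> borel_measurable borel" and b1: "\<And>x. \<bar>\<phi>1 x\<bar> \<le> K"
  defines "\<psi>1 \<equiv> ctransY e c \<mu> (\<lambda>x. ereal (\<phi>1 x))"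
  shows "(\<lambda>x. ereal (\<phi>1 x)) \<in> Lexp e \<mu>"
    and "(\<lambda>y. ereal (\<psi>1 y)) \<in> Lexp e nu'"
    and "\<psi>1 \<in> borel_measurable borel"
    and "\<exists>K'. \<forall>y. \<bar>\<psi>1 y\<bar> \<le> K'"
    and "Dual e c \<mu> nu' (\<lambda>x. ereal (\<phi>1 x)) (\<lambda>y. ereal (\<psi>1 y))
         = eint \<mu> (\<lambda>x. ereal (\<phi>1 x)) + eint nu' (\<lambda>y. ereal (\<psi>1 y))"
proof -
  interpret Q: pair_prob_space \<mu> nu' by (rule pps)
  show L1: "(\<lambda>x. ereal (\<phi>1 x)) \<in> Lexp e \<mu>"
    by (rule Lexp_bounded[OF eps_pos mu _ b1]) measurable
  have ex: "ennreal (exp (- \<psi>1 y / e)) = (\<integral>\<^sup>+ x. exp_eps e (ereal (\<phi>1 x) - ereal (c x y)) \<partial>\<mu>)" for y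
    unfolding \<psi>1_def ctransY_eq by (rule ctrans_basic(1)[OF eps_pos L1 c_bdd])
  define J where "J = e * ln (enn2real (\<integral>\<^sup>+ x. exp_eps e (ereal (\<phi>1 x)) \<partial>\<mu>))"
  have bd: "\<bar>\<psi>1 y\<bar> \<le> \<bar>J\<bar> + 1" for y
    using ctrans_basic(2)[OF eps_pos L1, where k="\<lambda>y x. c x y" and a=y] c_bdd
    unfolding \<psi>1_def J_def ctransY_eq by simp
  then show "\<exists>K'. \<forall>y. \<bar>\<psi>1 y\<bar> \<le> K'" by blast
  show m2[measurable]: "\<psi>1 \<in> borel_measurable borel"
  proof -
    have "(\<lambda>(y, x). c x y) \<in> borel_measurable (borel \<Otimes>\<^sub>M \<mu>)" by measurable
    then show ?thesis unfolding \<psi>1_def ctransY_eq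
      by (rule ctrans_meas) (simp_all add: mu prob_space_imp_sigma_finite)
  qed
  show L2: "(\<lambda>y. ereal (\<psi>1 y)) \<in> Lexp e nu'"
    by (rule Lexp_bounded[OF eps_pos prob_nu' _ bd]) measurable
  have X: "(\<integral>\<^sup>+ z. exp_eps e (ereal (\<phi>1 (fst z)) + ereal (\<psi>1 (snd z)) - ereal (c (fst z) (snd z))) \<partial>(\<mu> \<Otimes>\<^sub>M nu')) = 1"
  proof -
    have "(\<integral>\<^sup>+ z. exp_eps e (ereal (\<phi>1 (fst z)) + ereal (\<psi>1 (snd z)) - ereal (c (fst z) (snd z))) \<partial>(\<mu> \<Otimes>\<^sub>M nu'))
        = (\<integral>\<^sup>+ y. \<integral>\<^sup>+ x. exp_eps e (ereal (\<phi>1 x) + ereal (\<psi>1 y) - ereal (c x y)) \<partial>\<mu> \<partial>nu')"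
    proof -
      have mm: "(\<lambda>z. exp_eps e (ereal (\<phi>1 (fst z)) + ereal (\<psi>1 (snd z)) - ereal (c (fst z) (snd z)))) \<in> borel_measurable (\<mu> \<Otimes>\<^sub>M nu')"
        by (rule exp_eps_measurable) measurable
      show ?thesis by (subst Q.nn_integral_snd[symmetric, OF mm]) simp
    qed
    also have "\<dots> = (\<integral>\<^sup>+ y. 1 \<partial>nu')"
    proof (rule nn_integral_cong)
      fix y
      have mm: "(\<lambda>x. exp_eps e (ereal (\<phi>1 x) - ereal (c x y))) \<in> borel_measurable \<mu>" by measurable
      have pw: "exp_eps e (ereal (\<phi>1 x) + ereal (\<psi>1 y) - ereal (c x y))
          = ennreal (exp (\<psi>1 y / e)) * exp_eps e (ereal (\<phi>1 x) - ereal (c x y))" for x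
      proof -
        have arg: "(\<phi>1 x + \<psi>1 y - c x y) / e = \<psi>1 y / e + (\<phi>1 x - c x y) / e"
          using e_ne by (simp add: field_simps)
        show ?thesis by (simp only: ereal_minus plus_ereal.simps exp_eps_ereal arg ee[symmetric])
      qed
      have "(\<integral>\<^sup>+ x. exp_eps e (ereal (\<phi>1 x) + ereal (\<psi>1 y) - ereal (c x y)) \<partial>\<mu>)
          = ennreal (exp (\<psi>1 y / e)) * (\<integral>\<^sup>+ x. exp_eps e (ereal (\<phi>1 x) - ereal (c x y)) \<partial>\<mu>)"
        by (simp only: pw nn_integral_cmult[OF mm])
      also have "\<dots> = 1" by (simp only: ex[symmetric] exp_cancel)
      finally show "(\<integral>\<^sup>+ x. exp_eps e (ereal (\<phi>1 x) + ereal (\<psi>1 y) - ereal (c x y)) \<partial>\<mu>) = 1" .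
    qed
    also have "\<dots> = 1" using prob_space.emeasure_space_1[OF prob_nu'] by simp
    finally show ?thesis .
  qed
  have i1: "eint \<mu> (\<lambda>x. ereal (\<phi>1 x)) = ereal (\<integral>x. \<phi>1 x \<partial>\<mu>)"
    by (rule eint_integrable[OF integrable_bdd[OF mu _ b1]]) measurable
  have i2: "eint nu' (\<lambda>y. ereal (\<psi>1 y)) = ereal (\<integral>y. \<psi>1 y \<partial>nu')"
    by (rule eint_integrable[OF integrable_bdd[OF prob_nu' _ bd]]) measurable
  show "Dual e c \<mu> nu' (\<lambda>x. ereal (\<phi>1 x)) (\<lambda>y. ereal (\<psi>1 y))
         = eint \<mu> (\<lambda>x. ereal (\<phi>1 x)) + eint nu' (\<lambda>y. ereal (\<psi>1 y))"
  proof -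
    have one: "enn2ereal 1 = 1" using enn2ereal_ennreal[of 1] by simp
    show ?thesis unfolding Dual_def X one i1 i2 by simp
  qed
qed

end


lemma eint_ge:
  fixes l L :: "'a \<Rightarrow> real"
  assumes L: "integrable M L" and lm: "l \<in> borel_measurable M" and ae: "AE x in M. L x \<le> l x"
  shows "ereal (\<integral>x. L x \<partial>M) \<le> eint M (\<lambda>x. ereal (l x))"
proof -
  have e1: "ereal (\<integral>x. L x \<partial>M) = enn2ereal (\<integral>\<^sup>+ x. ennreal (L x) \<partial>M) - enn2ereal (\<integral>\<^sup>+ x. ennreal (- L x) \<partial>M)"
    using eint_integrable[OF L] by (simp add: eint_def)
  have e2: "eint M (\<lambda>x. ereal (l x)) = enn2ereal (\<integral>\<^sup>+ x. ennreal (l x) \<partial>M) - enn2ereal (\<integral>\<^sup>+ x. ennreal (- l x) \<partial>M)"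
    by (simp add: eint_def)
  have P: "(\<integral>\<^sup>+ x. ennreal (L x) \<partial>M) \<le> (\<integral>\<^sup>+ x. ennreal (l x) \<partial>M)"
    by (rule nn_integral_mono_AE) (use ae in \<open>auto elim!: eventually_mono intro: ennreal_leI\<close>)
  have N: "(\<integral>\<^sup>+ x. ennreal (- l x) \<partial>M) \<le> (\<integral>\<^sup>+ x. ennreal (- L x) \<partial>M)"
    by (rule nn_integral_mono_AE) (use ae in \<open>auto elim!: eventually_mono intro: ennreal_leI\<close>)
  show ?thesis unfolding e1 e2
    by (rule ereal_minus_mono) (use P N in \<open>simp_all add: less_eq_ennreal.rep_eq\<close>)
qed

lemma enn2ereal_minus_ne_PInf: assumes "a < \<infinity>" shows "enn2ereal a - enn2ereal b \<noteq> \<infinity>"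
proof -
  have "enn2ereal a \<noteq> \<infinity>" using assms by auto
  moreover have "0 \<le> enn2ereal a" "0 \<le> enn2ereal b" by auto
  ultimately show ?thesis by (cases "enn2ereal a"; cases "enn2ereal b") auto
qed

lemma enn2ereal_minus_MInf: "a < \<infinity> \<Longrightarrow> enn2ereal a - enn2ereal \<infinity> = -\<infinity>"
  by (cases a) auto

lemma dual_neg_inf:
  fixes a b :: ereal and X :: ennreal
  assumes "a \<noteq> \<infinity>" "b \<noteq> \<infinity>" "a = -\<infinity> \<or> b = -\<infinity>" "0 < e"
  shows "a + b - ereal e * enn2ereal X + ereal e = -\<infinity>"
proof -
  have ab: "a + b = -\<infinity>" using assms by (cases a; cases b) auto
  have y: "ereal e * enn2ereal X \<noteq> -\<infinity>"
    using assms(4) by (cases "enn2ereal X") (auto simp: ereal_mult_m1 split: if_splits)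
  show ?thesis using y by (cases "ereal e * enn2ereal X") (simp_all add: ab)
qed

lemma exp_eps_fin: "t \<noteq> \<infinity> \<Longrightarrow> exp_eps e t \<noteq> \<infinity>"
  by (cases t) auto

lemma sum3_fin: "a \<noteq> \<infinity> \<Longrightarrow> b \<noteq> (\<infinity>::ereal) \<Longrightarrow> a + b - ereal r \<noteq> \<infinity>"
  by (cases a; cases b) auto

context S begin

lemma phi_int: "integrable \<mu> phi"
  by (rule integrable_bdd[OF mu _ phi_abs]) measurable

lemma psi_int: "integrable nu' psi"
  by (rule integrable_bdd[OF prob_nu' _ psi_abs]) measurable

lemma weak_dual_real:
  fixes \<phi>r :: "'x \<Rightarrow> real" and \<psi>r :: "'y \<Rightarrow> real" and \<phi>' \<psi>'
  assumes pm[measurable]: "\<phi>' \<in> borel_measurable \<mu>" and qm[measurable]: "\<psi>' \<in> borel_measurable nu'"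
    and pfin: "\<And>x. \<phi>' x \<noteq> \<infinity>" and qfin: "\<And>y. \<psi>' y \<noteq> \<infinity>"
    and pint: "integrable \<mu> \<phi>r" and qint: "integrable nu' \<psi>r"
    and pae: "AE x in \<mu>. \<phi>' x = ereal (\<phi>r x)" and qae: "AE y in nu'. \<psi>' y = ereal (\<psi>r y)"
    and X: "(\<integral>\<^sup>+ z. exp_eps e (\<phi>' (fst z) + \<psi>' (snd z) - ereal (c (fst z) (snd z))) \<partial>(\<mu> \<Otimes>\<^sub>M nu')) = ennreal x"
    and x0: "0 \<le> x"
  shows "(\<integral>x. \<phi>r x \<partial>\<mu>) + (\<integral>y. \<psi>r y \<partial>nu') - e * x + e \<le> (\<integral>x. phi x \<partial>\<mu>) + (\<integral>y. psi y \<partial>nu')"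
proof -
  have cp: "pistar \<in> couplings \<mu> nu'" by (rule pistar_coupling)
  interpret PS: prob_space pistar using cp by (simp add: couplings_def)
  define h where "h z = (\<phi>r (fst z) - phi (fst z)) + (\<psi>r (snd z) - psi (snd z))" for z
  have i1: "integrable \<mu> (\<lambda>x. \<phi>r x - phi x)" using pint phi_int by auto
  have i2: "integrable nu' (\<lambda>y. \<psi>r y - psi y)" using qint psi_int by auto
  have hint: "integrable pistar h"
    unfolding h_def by (rule Bochner_Integration.integrable_add) (use coupling_integral_fst(1)[OF cp i1] coupling_integral_snd(1)[OF cp i2] in simp_all)
  have hval: "(\<integral>z. h z \<partial>pistar) = ((\<integral>x. \<phi>r x \<partial>\<mu>) - (\<integral>x. phi x \<partial>\<mu>)) + ((\<integral>y. \<psi>r y \<partial>nu') - (\<integral>y. psi y \<partial>nu'))"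
    unfolding h_def
    by (simp add: Bochner_Integration.integral_add coupling_integral_fst[OF cp i1] coupling_integral_snd[OF cp i2]
        Bochner_Integration.integral_diff[OF pint phi_int] Bochner_Integration.integral_diff[OF qint psi_int])
  define E where "E z = exp_eps e (\<phi>' (fst z) + \<psi>' (snd z) - ereal (c (fst z) (snd z)))" for z
  have Em[measurable]: "E \<in> borel_measurable (\<mu> \<Otimes>\<^sub>M nu')"
    unfolding E_def[abs_def] by (rule exp_eps_measurable) measurable
  have Efin: "E z \<noteq> \<infinity>" for z unfolding E_def by (intro exp_eps_fin sum3_fin pfin qfin)
  define Rf where "Rf z = enn2real (E z) / gg (fst z) (snd z)" for z
  have Rm0[measurable]: "Rf \<in> borel_measurable (\<mu> \<Otimes>\<^sub>M nu')"
    unfolding Rf_def[abs_def] gg_def by measurable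
  have Rm[measurable]: "Rf \<in> borel_measurable pistar"
    using Rm0 measurable_cong_sets[OF sets_pistar refl] by simp
  have Rnn0: "0 \<le> Rf z" for z unfolding Rf_def using gg_pos[of "fst z" "snd z"] by (simp add: divide_nonneg_pos)
  have "(\<integral>\<^sup>+ z. ennreal (Rf z) \<partial>pistar) = (\<integral>\<^sup>+ z. ennreal (gg (fst z) (snd z)) * ennreal (Rf z) \<partial>(\<mu> \<Otimes>\<^sub>M nu'))"
    unfolding pistar_def by (rule nn_integral_density[OF gg_meas2]) measurable
  also have "\<dots> = (\<integral>\<^sup>+ z. E z \<partial>(\<mu> \<Otimes>\<^sub>M nu'))"
  proof (rule nn_integral_cong)
    fix z
    have g: "gg (fst z) (snd z) > 0" by (rule gg_pos)
    have "ennreal (gg (fst z) (snd z)) * ennreal (Rf z) = ennreal (gg (fst z) (snd z) * Rf z)"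
      using g Rnn0[of z] by (simp add: ennreal_mult)
    also have "gg (fst z) (snd z) * Rf z = enn2real (E z)" unfolding Rf_def using g by simp
    also have "ennreal (enn2real (E z)) = E z" using Efin[of z] by (simp add: less_top)
    finally show "ennreal (gg (fst z) (snd z)) * ennreal (Rf z) = E z" .
  qed
  also have "\<dots> = ennreal x" using X unfolding E_def .
  finally have Rnn: "(\<integral>\<^sup>+ z. ennreal (Rf z) \<partial>pistar) = ennreal x" .
  have Rint: "integrable pistar Rf"
    by (rule integrableI_nn_integral_finite[OF Rm _ Rnn]) (simp add: Rnn0)
  have Rval: "(\<integral>z. Rf z \<partial>pistar) = x"
    using integral_eq_nn_integral[OF Rm] Rnn Rnn0 x0 by simp
  have ae: "AE z in pistar. h z \<le> e * (Rf z - 1)"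
    using coupling_AE_fst[OF cp pae] coupling_AE_snd[OF cp qae]
  proof eventually_elim
    case (elim z)
    have "E z = ennreal (exp ((\<phi>r (fst z) + \<psi>r (snd z) - c (fst z) (snd z)) / e))"
      unfolding E_def elim by simp
    hence "Rf z = exp ((\<phi>r (fst z) + \<psi>r (snd z) - c (fst z) (snd z)) / e)
                 / exp ((phi (fst z) + psi (snd z) - c (fst z) (snd z)) / e)"
      unfolding Rf_def gg_def by simp
    also have "\<dots> = exp (h z / e)"
      unfolding exp_diff[symmetric] h_def by (simp add: diff_divide_distrib[symmetric] algebra_simps)
    finally have R: "Rf z = exp (h z / e)" .
    have "1 + h z / e \<le> exp (h z / e)" by (rule exp_ge_add_one_self)
    hence "e * (1 + h z / e) \<le> e * exp (h z / e)" using eps_pos by simp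
    hence "e + h z \<le> e * exp (h z / e)" using e_ne by (simp add: algebra_simps)
    thus ?case unfolding R by (simp add: algebra_simps)
  qed
  have rint: "integrable pistar (\<lambda>z. e * (Rf z - 1))"
    using Rint by auto
  have "(\<integral>z. h z \<partial>pistar) \<le> (\<integral>z. e * (Rf z - 1) \<partial>pistar)"
    by (rule integral_mono_AE[OF hint rint ae])
  also have "\<dots> = e * (x - 1)"
    using Rint Rval by (simp add: Bochner_Integration.integral_diff PS.prob_space)
  finally show ?thesis unfolding hval by (simp add: algebra_simps)
qed

lemma weak_dual:
  assumes p: "\<phi>' \<in> Lexp e \<mu>" and q: "\<psi>' \<in> Lexp e nu'"
  shows "Dual e c \<mu> nu' \<phi>' \<psi>' \<le> ereal (\<integral>x. phi x \<partial>\<mu>) + ereal (\<integral>y. psi y \<partial>nu')"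
proof -
  have pm[measurable]: "\<phi>' \<in> borel_measurable \<mu>" and pfin: "\<And>x. \<phi>' x \<noteq> \<infinity>"
    using p space_mu by (auto simp: Lexp_def)
  have qm[measurable]: "\<psi>' \<in> borel_measurable nu'" and qfin: "\<And>y. \<psi>' y \<noteq> \<infinity>"
    using q space_nu' by (auto simp: Lexp_def)
  define X where "X = (\<integral>\<^sup>+ z. exp_eps e (\<phi>' (fst z) + \<psi>' (snd z) - ereal (c (fst z) (snd z))) \<partial>(\<mu> \<Otimes>\<^sub>M nu'))"
  have D: "Dual e c \<mu> nu' \<phi>' \<psi>' = eint \<mu> \<phi>' + eint nu' \<psi>' - ereal e * enn2ereal X + ereal e"
    by (simp add: Dual_def X_def)
  have PP: "(\<integral>\<^sup>+ x. e2ennreal (\<phi>' x) \<partial>\<mu>) < \<infinity>" by (rule Lexp_pos_finite[OF eps_pos p])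
  have PQ: "(\<integral>\<^sup>+ y. e2ennreal (\<psi>' y) \<partial>nu') < \<infinity>" by (rule Lexp_pos_finite[OF eps_pos q])
  have Ane: "eint \<mu> \<phi>' \<noteq> \<infinity>" unfolding eint_def by (rule enn2ereal_minus_ne_PInf[OF PP])
  have Bne: "eint nu' \<psi>' \<noteq> \<infinity>" unfolding eint_def by (rule enn2ereal_minus_ne_PInf[OF PQ])
  show ?thesis
  proof (cases "(\<integral>\<^sup>+ x. e2ennreal (- \<phi>' x) \<partial>\<mu>) = \<infinity> \<or> (\<integral>\<^sup>+ y. e2ennreal (- \<psi>' y) \<partial>nu') = \<infinity>")
    case True
    then have "eint \<mu> \<phi>' = -\<infinity> \<or> eint nu' \<psi>' = -\<infinity>"
      using PP PQ enn2ereal_minus_MInf unfolding eint_def by auto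
    then have "Dual e c \<mu> nu' \<phi>' \<psi>' = -\<infinity>"
      unfolding D by (rule dual_neg_inf[OF Ane Bne _ eps_pos])
    thus ?thesis by simp
  next
    case False
    then have NP: "(\<integral>\<^sup>+ x. e2ennreal (- \<phi>' x) \<partial>\<mu>) < \<infinity>" and NQ: "(\<integral>\<^sup>+ y. e2ennreal (- \<psi>' y) \<partial>nu') < \<infinity>"
      by (auto simp: less_top)
    note fp = eint_finite[OF pm PP NP] and fq = eint_finite[OF qm PQ NQ]
    show ?thesis
    proof (cases "X = \<infinity>")
      case True
      then show ?thesis unfolding D fp(3) fq(3) using eps_pos by simp
    next
      case False
      then obtain x where x: "X = ennreal x" "0 \<le> x" by (cases X) (auto simp: top_unique)
      have R: "(\<integral>x. real_of_ereal (\<phi>' x) \<partial>\<mu>) + (\<integral>y. real_of_ereal (\<psi>' y) \<partial>nu') - e * x + e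
               \<le> (\<integral>x. phi x \<partial>\<mu>) + (\<integral>y. psi y \<partial>nu')"
        by (rule weak_dual_real[OF pm qm pfin qfin fp(1) fq(1) fp(2) fq(2)]) (use x in \<open>simp_all add: X_def\<close>)
      show ?thesis unfolding D fp(3) fq(3) x using R x(2) by simp
    qed
  qed
qed

end


context S begin

lemma sf_rho: "sigma_finite_measure (\<mu> \<Otimes>\<^sub>M nu')"
  by (rule prob_space_imp_sigma_finite[OF prob_space_pair[OF mu prob_nu']])

lemma AE_to_pistar:
  assumes "AE z in \<mu> \<Otimes>\<^sub>M nu'. P z" shows "AE z in pistar. P z"
proof -
  have "AE z in density (\<mu> \<Otimes>\<^sub>M nu') (\<lambda>z. ennreal (gg (fst z) (snd z))). P z"
    using AE_density[OF gg_meas2] assms by (auto elim: eventually_mono)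
  then show ?thesis by (simp only: pistar_def)
qed

lemma gg_total: "(\<integral>\<^sup>+ z. ennreal (gg (fst z) (snd z)) \<partial>(\<mu> \<Otimes>\<^sub>M nu')) = 1"
proof -
  have "(\<integral>\<^sup>+ z. 1 \<partial>pistar) = (\<integral>\<^sup>+ z. ennreal (gg (fst z) (snd z)) * 1 \<partial>(\<mu> \<Otimes>\<^sub>M nu'))"
    unfolding pistar_def by (rule nn_integral_density[OF gg_meas2]) simp
  moreover have "(\<integral>\<^sup>+ z. 1 \<partial>pistar) = 1"
    using marg_fst[of "\<lambda>_. 1"] prob_space.emeasure_space_1[OF mu] by simp
  ultimately show ?thesis by simp
qed

definition lg where "lg z = (phi (fst z) + psi (snd z) - c (fst z) (snd z)) / e"

lemma lg_meas[measurable]: "lg \<in> borel_measurable (\<mu> \<Otimes>\<^sub>M nu')"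
  unfolding lg_def[abs_def] by measurable

lemma lg_abs: "\<bar>lg z\<bar> \<le> (\<bar>A\<bar> + 1 + (\<bar>B\<bar> + 1) + 1) / e"
proof -
  have "\<bar>phi (fst z) + psi (snd z) - c (fst z) (snd z)\<bar> \<le> \<bar>A\<bar> + 1 + (\<bar>B\<bar> + 1) + 1"
    using phi_abs[of "fst z"] psi_abs[of "snd z"] c_bdd[of "fst z" "snd z"] by linarith
  then show ?thesis unfolding lg_def using eps_pos by (simp add: abs_div divide_right_mono)
qed

lemma lg_gg: "ln (gg (fst z) (snd z)) = lg z"
  by (simp add: gg_def lg_def)

lemma coupling_lg:
  assumes cp: "\<pi> \<in> couplings \<mu> nu'"
  shows "integrable \<pi> lg" "integrable \<pi> (\<lambda>z. c (fst z) (snd z))"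
    "(\<integral>z. lg z \<partial>\<pi>) = ((\<integral>x. phi x \<partial>\<mu>) + (\<integral>y. psi y \<partial>nu') - (\<integral>z. c (fst z) (snd z) \<partial>\<pi>)) / e"
proof -
  have s[measurable_cong]: "sets \<pi> = sets (\<mu> \<Otimes>\<^sub>M nu')" using cp by (simp add: couplings_def)
  have pp: "prob_space \<pi>" using cp by (simp add: couplings_def)
  show ci: "integrable \<pi> (\<lambda>z. c (fst z) (snd z))"
    by (rule integrable_bdd[OF pp _ c_bdd]) measurable
  show "integrable \<pi> lg"
    by (rule integrable_bdd[OF pp _ lg_abs]) measurable
  have f1: "integrable \<pi> (\<lambda>z. phi (fst z))" and f2: "(\<integral>z. phi (fst z) \<partial>\<pi>) = (\<integral>x. phi x \<partial>\<mu>)"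
    using coupling_integral_fst[OF cp phi_int] by auto
  have g1: "integrable \<pi> (\<lambda>z. psi (snd z))" and g2: "(\<integral>z. psi (snd z) \<partial>\<pi>) = (\<integral>y. psi y \<partial>nu')"
    using coupling_integral_snd[OF cp psi_int] by auto
  have "(\<integral>z. lg z \<partial>\<pi>) = (\<integral>z. (phi (fst z) + psi (snd z) - c (fst z) (snd z)) \<partial>\<pi>) / e"
    unfolding lg_def by simp
  also have "(\<integral>z. (phi (fst z) + psi (snd z) - c (fst z) (snd z)) \<partial>\<pi>)
      = (\<integral>z. phi (fst z) \<partial>\<pi>) + (\<integral>z. psi (snd z) \<partial>\<pi>) - (\<integral>z. c (fst z) (snd z) \<partial>\<pi>)"
    using f1 g1 ci by (simp add: Bochner_Integration.integral_diff Bochner_Integration.integral_add)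
  finally show "(\<integral>z. lg z \<partial>\<pi>) = ((\<integral>x. phi x \<partial>\<mu>) + (\<integral>y. psi y \<partial>nu') - (\<integral>z. c (fst z) (snd z) \<partial>\<pi>)) / e"
    unfolding f2 g2 .
qed

lemma OT_upper: "OT e c \<mu> nu' \<le> ereal (\<integral>x. phi x \<partial>\<mu>) + ereal (\<integral>y. psi y \<partial>nu')"
proof -
  have cp: "pistar \<in> couplings \<mu> nu'" by (rule pistar_coupling)
  have pp: "prob_space pistar" using cp by (simp add: couplings_def)
  have ac: "absolutely_continuous (\<mu> \<Otimes>\<^sub>M nu') pistar"
    unfolding pistar_def by (rule absolutely_continuousI_density[OF gg_meas2])
  have rn: "AE z in \<mu> \<Otimes>\<^sub>M nu'. ennreal (gg (fst z) (snd z)) = RN_deriv (\<mu> \<Otimes>\<^sub>M nu') pistar z"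
    by (rule sigma_finite_measure.RN_deriv_unique[OF sf_rho gg_meas2]) (simp add: pistar_def)
  have rn2: "AE z in pistar. ereal (ln (enn2real (RN_deriv (\<mu> \<Otimes>\<^sub>M nu') pistar z))) = ereal (lg z)"
  proof -
    have rn': "AE z in \<mu> \<Otimes>\<^sub>M nu'. RN_deriv (\<mu> \<Otimes>\<^sub>M nu') pistar z = ennreal (gg (fst z) (snd z))"
      using rn by (auto elim: eventually_mono)
    show ?thesis by (rule AE_to_pistar) (use rn' in \<open>auto elim!: eventually_mono simp: gg_def lg_def\<close>)
  qed
  have KL: "KLdiv pistar (\<mu> \<Otimes>\<^sub>M nu') = ereal (\<integral>z. lg z \<partial>pistar)"
    unfolding KLdiv_def using ac eint_cong_AE[OF rn2] eint_integrable[OF coupling_lg(1)[OF cp]] by simp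
  have "OT e c \<mu> nu' \<le> ereal (\<integral>z. c (fst z) (snd z) \<partial>pistar) + ereal e * KLdiv pistar (\<mu> \<Otimes>\<^sub>M nu')"
    unfolding OT_def by (rule INF_lower[OF cp])
  also have "\<dots> = ereal (\<integral>x. phi x \<partial>\<mu>) + ereal (\<integral>y. psi y \<partial>nu')"
    unfolding KL coupling_lg(3)[OF cp] using e_ne by simp
  finally show ?thesis .
qed

lemma OT_lower: "ereal (\<integral>x. phi x \<partial>\<mu>) + ereal (\<integral>y. psi y \<partial>nu') \<le> OT e c \<mu> nu'"
  unfolding OT_def
proof (rule INF_greatest)
  fix \<pi> assume cp: "\<pi> \<in> couplings \<mu> nu'"
  have s[measurable_cong]: "sets \<pi> = sets (\<mu> \<Otimes>\<^sub>M nu')" using cp by (simp add: couplings_def)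
  have pp: "prob_space \<pi>" using cp by (simp add: couplings_def)
  interpret PP: prob_space \<pi> by (rule pp)
  show "ereal (\<integral>x. phi x \<partial>\<mu>) + ereal (\<integral>y. psi y \<partial>nu')
        \<le> ereal (\<integral>z. c (fst z) (snd z) \<partial>\<pi>) + ereal e * KLdiv \<pi> (\<mu> \<Otimes>\<^sub>M nu')"
  proof (cases "absolutely_continuous (\<mu> \<Otimes>\<^sub>M nu') \<pi>")
    case False
    then show ?thesis using eps_pos by (simp add: KLdiv_def)
  next
    case ac: True
    define f where "f = RN_deriv (\<mu> \<Otimes>\<^sub>M nu') \<pi>"
    have fm[measurable]: "f \<in> borel_measurable (\<mu> \<Otimes>\<^sub>M nu')" unfolding f_def by simp
    have dens: "density (\<mu> \<Otimes>\<^sub>M nu') f = \<pi>"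
      unfolding f_def by (rule sigma_finite_measure.density_RN_deriv[OF sf_rho ac s])
    have aefin: "AE z in \<mu> \<Otimes>\<^sub>M nu'. f z \<noteq> \<infinity>"
      unfolding f_def by (rule sigma_finite_measure.RN_deriv_finite[OF sf_rho prob_space_imp_sigma_finite[OF pp] ac s])
    have aepos: "AE z in \<pi>. 0 < f z \<and> f z \<noteq> \<infinity>"
    proof -
      have "AE z in density (\<mu> \<Otimes>\<^sub>M nu') f. 0 < f z \<and> f z \<noteq> \<infinity>"
        using AE_density[OF fm] aefin by (auto elim: eventually_mono)
      then show ?thesis by (simp only: dens)
    qed
    define fr where "fr z = enn2real (f z)" for z
    define l where "l z = ln (fr z)" for z
    define q where "q z = gg (fst z) (snd z) / fr z" for z
    define L where "L z = lg z + 1 - q z" for z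
    have frm[measurable]: "fr \<in> borel_measurable (\<mu> \<Otimes>\<^sub>M nu')" unfolding fr_def[abs_def] by measurable
    have qm0[measurable]: "q \<in> borel_measurable (\<mu> \<Otimes>\<^sub>M nu')" unfolding q_def[abs_def] gg_def by measurable
    have qm[measurable]: "q \<in> borel_measurable \<pi>" using qm0 measurable_cong_sets[OF s refl] by simp
    have lm[measurable]: "l \<in> borel_measurable \<pi>"
      using measurable_cong_sets[OF s refl] unfolding l_def[abs_def] by simp
    have q0: "0 \<le> q z" for z unfolding q_def fr_def using gg_pos[of "fst z" "snd z"] by (simp add: divide_nonneg_nonneg)
    have KLeq: "KLdiv \<pi> (\<mu> \<Otimes>\<^sub>M nu') = eint \<pi> (\<lambda>z. ereal (l z))"
      unfolding KLdiv_def l_def fr_def f_def using ac by simp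
    have ae_le: "AE z in \<pi>. L z \<le> l z"
      using aepos
    proof eventually_elim
      case (elim z)
      then obtain r where r: "f z = ennreal r" "0 < r" by (cases "f z") auto
      have fr: "fr z = r" unfolding fr_def using r by simp
      have g: "gg (fst z) (snd z) > 0" by (rule gg_pos)
      have "ln (q z) \<le> q z - 1" by (rule ln_le_minus_one) (simp add: q_def fr g r)
      moreover have "ln (q z) = lg z - l z"
        unfolding q_def l_def fr using g r by (simp add: ln_div lg_gg)
      ultimately show ?case unfolding L_def by simp
    qed
    have qnn: "(\<integral>\<^sup>+ z. ennreal (q z) \<partial>\<pi>) \<le> 1"
    proof -
      have "(\<integral>\<^sup>+ z. ennreal (q z) \<partial>\<pi>) = (\<integral>\<^sup>+ z. f z * ennreal (q z) \<partial>(\<mu> \<Otimes>\<^sub>M nu'))"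
        unfolding dens[symmetric] by (rule nn_integral_density[OF fm]) measurable
      also have "\<dots> \<le> (\<integral>\<^sup>+ z. ennreal (gg (fst z) (snd z)) \<partial>(\<mu> \<Otimes>\<^sub>M nu'))"
      proof (rule nn_integral_mono)
        fix z
        show "f z * ennreal (q z) \<le> ennreal (gg (fst z) (snd z))"
        proof (cases "f z")
          case (real r)
          then show ?thesis
          proof (cases "r = 0")
            case True then show ?thesis using real by simp
          next
            case False
            then have "ennreal r * ennreal (gg (fst z) (snd z) / r) = ennreal (gg (fst z) (snd z))"
              using real gg_pos[of "fst z" "snd z"] by (simp add: ennreal_mult[symmetric])
            then show ?thesis using real by (simp add: q_def fr_def)
          qed
        next
          case top then show ?thesis by (simp add: q_def fr_def)
        qed
      qed
      also have "\<dots> = 1" by (rule gg_total)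
      finally show ?thesis .
    qed
    have qint: "integrable \<pi> q"
      by (rule integrableI_nonneg[OF qm]) (use qnn q0 in \<open>auto intro: le_less_trans\<close>)
    have qval: "(\<integral>z. q z \<partial>\<pi>) \<le> 1"
      using integral_eq_nn_integral[OF qm] q0 qnn by (simp add: enn2real_leI)
    have lgint: "integrable \<pi> lg" by (rule coupling_lg(1)[OF cp])
    have Lint: "integrable \<pi> L" unfolding L_def[abs_def] using lgint qint by auto
    have Lval: "(\<integral>z. L z \<partial>\<pi>) = (\<integral>z. lg z \<partial>\<pi>) + 1 - (\<integral>z. q z \<partial>\<pi>)"
      unfolding L_def using lgint qint
      by (simp add: Bochner_Integration.integral_diff Bochner_Integration.integral_add PP.prob_space)
    have "ereal (\<integral>z. L z \<partial>\<pi>) \<le> KLdiv \<pi> (\<mu> \<Otimes>\<^sub>M nu')"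
      unfolding KLeq by (rule eint_ge[OF Lint lm ae_le])
    moreover have "(\<integral>z. lg z \<partial>\<pi>) \<le> (\<integral>z. L z \<partial>\<pi>)" using Lval qval by simp
    ultimately have KLge: "ereal (\<integral>z. lg z \<partial>\<pi>) \<le> KLdiv \<pi> (\<mu> \<Otimes>\<^sub>M nu')"
      by (meson ereal_less_eq(3) order_trans)
    have "ereal (\<integral>x. phi x \<partial>\<mu>) + ereal (\<integral>y. psi y \<partial>nu')
        = ereal (\<integral>z. c (fst z) (snd z) \<partial>\<pi>) + ereal e * ereal (\<integral>z. lg z \<partial>\<pi>)"
      unfolding coupling_lg(3)[OF cp] using e_ne by simp
    also have "\<dots> \<le> ereal (\<integral>z. c (fst z) (snd z) \<partial>\<pi>) + ereal e * KLdiv \<pi> (\<mu> \<Otimes>\<^sub>M nu')"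
      by (intro add_left_mono ereal_mult_left_mono KLge) (use eps_pos in simp)
    finally show ?thesis .
  qed
qed

lemma OT_eq: "OT e c \<mu> nu' = ereal (\<integral>x. phi x \<partial>\<mu>) + ereal (\<integral>y. psi y \<partial>nu')"
  using OT_upper OT_lower by (rule antisym)

end


context S begin

definition kk where "kk = (A - B) / 2"

lemma fce_shift_X: "ctransX e c nu' (\<lambda>y. ereal (psi y + kk)) x = phi x - kk"
proof -
  have m2: "(\<lambda>y. exp_eps e (\<psi>\<^sub>0 y - ereal (c x y))) \<in> borel_measurable \<nu>" by measurable
  have pw: "Dn y * exp_eps e (ereal (psi y + kk) - ereal (c x y))
      = ennreal (exp (kk / e)) * exp_eps e (\<psi>\<^sub>0 y - ereal (c x y))" for y
  proof -
    have arg: "- psi y / e + (psi y + kk - c x y) / e = kk / e + - c x y / e"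
      using e_ne by (simp add: field_simps)
    have "Dn y * exp_eps e (ereal (psi y + kk) - ereal (c x y))
        = exp_eps e (\<psi>\<^sub>0 y) * (ennreal (exp (- psi y / e)) * ennreal (exp ((psi y + kk - c x y) / e)))"
      by (simp add: Dn_def mult.assoc)
    also have "\<dots> = exp_eps e (\<psi>\<^sub>0 y) * ennreal (exp (kk / e + - c x y / e))"
      by (simp only: ee arg)
    also have "\<dots> = ennreal (exp (kk / e)) * (exp_eps e (\<psi>\<^sub>0 y) * ennreal (exp (- c x y / e)))"
      by (simp only: ee[symmetric] ac_simps)
    also have "\<dots> = ennreal (exp (kk / e)) * exp_eps e (\<psi>\<^sub>0 y - ereal (c x y))"
      by (simp only: exp_eps_minus)
    finally show ?thesis .
  qed
  have "(\<integral>\<^sup>+ y. exp_eps e (ereal (psi y + kk) - ereal (c x y)) \<partial>nu')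
      = (\<integral>\<^sup>+ y. Dn y * exp_eps e (ereal (psi y + kk) - ereal (c x y)) \<partial>\<nu>)"
    unfolding nu'_eq by (rule nn_integral_density[OF Dn_meas]) (rule exp_eps_measurable, measurable)
  also have "\<dots> = (\<integral>\<^sup>+ y. ennreal (exp (kk / e)) * exp_eps e (\<psi>\<^sub>0 y - ereal (c x y)) \<partial>\<nu>)"
    by (simp only: pw)
  also have "\<dots> = ennreal (exp (kk / e)) * (\<integral>\<^sup>+ y. exp_eps e (\<psi>\<^sub>0 y - ereal (c x y)) \<partial>\<nu>)"
    by (rule nn_integral_cmult[OF m2])
  also have "\<dots> = ennreal (exp (kk / e + - phi x / e))" by (simp only: phi_exp[symmetric] ee)
  finally have I: "(\<integral>\<^sup>+ y. exp_eps e (ereal (psi y + kk) - ereal (c x y)) \<partial>nu') = ennreal (exp (kk / e + - phi x / e))" .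
  show ?thesis unfolding ctransX_def I using e_ne by (simp add: field_simps)
qed

lemma fce_shift_Y: "ctransY e c \<mu> (\<lambda>x. ereal (phi x - kk)) y = psi y + kk"
proof -
  have m2: "(\<lambda>x. exp_eps e (ereal (phi x) - ereal (c x y))) \<in> borel_measurable \<mu>" by measurable
  have pw: "exp_eps e (ereal (phi x - kk) - ereal (c x y))
      = ennreal (exp (- kk / e)) * exp_eps e (ereal (phi x) - ereal (c x y))" for x
  proof -
    have arg: "(phi x - kk - c x y) / e = - kk / e + (phi x - c x y) / e"
      using e_ne by (simp add: field_simps)
    show ?thesis by (simp only: ereal_minus exp_eps_ereal arg ee[symmetric])
  qed
  have "(\<integral>\<^sup>+ x. exp_eps e (ereal (phi x - kk) - ereal (c x y)) \<partial>\<mu>)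
      = ennreal (exp (- kk / e)) * (\<integral>\<^sup>+ x. exp_eps e (ereal (phi x) - ereal (c x y)) \<partial>\<mu>)"
    by (simp only: pw nn_integral_cmult[OF m2])
  also have "\<dots> = ennreal (exp (- kk / e + - psi y / e))" by (simp only: psi_exp[symmetric] ee)
  finally have I: "(\<integral>\<^sup>+ x. exp_eps e (ereal (phi x - kk) - ereal (c x y)) \<partial>\<mu>) = ennreal (exp (- kk / e + - psi y / e))" .
  show ?thesis unfolding ctransY_def I using e_ne by (simp add: field_simps)
qed

lemma fce_exists:
  "\<exists>\<phi>'' \<in> Fce e c. OT e c \<mu> nu' =
     eint \<mu> (\<lambda>x. ereal (\<phi>'' x)) + eint nu' (\<lambda>y. ereal (ctransY e c \<mu> (\<lambda>x. ereal (\<phi>'' x)) y))"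
proof (rule bexI[of _ "\<lambda>x. phi x - kk"])
  have b1: "\<bar>phi x - kk\<bar> \<le> 3/2" for x using phi_bnd[of x] AB unfolding kk_def abs_le_iff by (simp add: field_simps)
  have b2: "\<bar>psi y + kk\<bar> \<le> 3/2" for y using psi_bnd[of y] AB unfolding kk_def abs_le_iff by (simp add: field_simps)
  show "(\<lambda>x. phi x - kk) \<in> Fce e c"
    unfolding Fce_def
  proof (intro CollectI exI conjI)
    show "prob_space nu'" by (rule prob_nu')
    show "sets nu' = sets borel" by (rule sets_nu')
    show "(\<lambda>y. psi y + kk) \<in> borel_measurable borel" by measurable
    show "(\<lambda>x. phi x - kk) = ctransX e c nu' (\<lambda>y. ereal (psi y + kk))"
      by (rule ext) (simp add: fce_shift_X)
    show "\<forall>x. \<bar>phi x - kk\<bar> \<le> 3 / 2" using b1 by simp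
    show "\<forall>y. \<bar>psi y + kk\<bar> \<le> 3 / 2" using b2 by simp
  qed
  have ic1: "integrable \<mu> (\<lambda>x. kk)" using integrable_bdd[OF mu, of "\<lambda>x. kk" "\<bar>kk\<bar>"] by simp
  have int1: "integrable \<mu> (\<lambda>x. phi x - kk)" using phi_int ic1 by (rule Bochner_Integration.integrable_diff)
  have i1: "eint \<mu> (\<lambda>x. ereal (phi x - kk)) = ereal ((\<integral>x. phi x \<partial>\<mu>) - kk)"
    unfolding eint_integrable[OF int1] Bochner_Integration.integral_diff[OF phi_int ic1]
    using prob_space.prob_space[OF mu] by simp
  have ic2: "integrable nu' (\<lambda>y. kk)" using integrable_bdd[OF prob_nu', of "\<lambda>x. kk" "\<bar>kk\<bar>"] by simp
  have int2: "integrable nu' (\<lambda>y. psi y + kk)" using psi_int ic2 by (rule Bochner_Integration.integrable_add)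
  have i2: "eint nu' (\<lambda>y. ereal (psi y + kk)) = ereal ((\<integral>y. psi y \<partial>nu') + kk)"
    unfolding eint_integrable[OF int2] Bochner_Integration.integral_add[OF psi_int ic2]
    using prob_space.prob_space[OF prob_nu'] by simp
  show "OT e c \<mu> nu' = eint \<mu> (\<lambda>x. ereal (phi x - kk))
      + eint nu' (\<lambda>y. ereal (ctransY e c \<mu> (\<lambda>x. ereal (phi x - kk)) y))"
    unfolding fce_shift_Y i1 i2 OT_eq by simp
qed

lemma fce_upper:
  assumes "\<phi>'' \<in> Fce e c"
  shows "eint \<mu> (\<lambda>x. ereal (\<phi>'' x)) + eint nu' (\<lambda>y. ereal (ctransY e c \<mu> (\<lambda>x. ereal (\<phi>'' x)) y))
         \<le> OT e c \<mu> nu'"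
proof -
  obtain \<xi> \<psi>' where xi: "prob_space \<xi>" and xs[measurable_cong]: "sets \<xi> = sets (borel :: 'y measure)"
    and pm[measurable]: "\<psi>' \<in> borel_measurable (borel :: 'y measure)"
    and eq: "\<phi>'' = ctransX e c \<xi> (\<lambda>y. ereal (\<psi>' y))"
    and b: "\<And>x. \<bar>\<phi>'' x\<bar> \<le> 3/2"
    using assms unfolding Fce_def by blast
  have m: "\<phi>'' \<in> borel_measurable borel"
  proof -
    have "(\<lambda>(x, y). c x y) \<in> borel_measurable (borel \<Otimes>\<^sub>M \<xi>)" by measurable
    then show ?thesis unfolding eq
      by (rule ctrans_meas) (simp_all add: xi prob_space_imp_sigma_finite)
  qed
  note DS = Dual_semi[OF m b]
  have "eint \<mu> (\<lambda>x. ereal (\<phi>'' x)) + eint nu' (\<lambda>y. ereal (ctransY e c \<mu> (\<lambda>x. ereal (\<phi>'' x)) y))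
      = Dual e c \<mu> nu' (\<lambda>x. ereal (\<phi>'' x)) (\<lambda>y. ereal (ctransY e c \<mu> (\<lambda>x. ereal (\<phi>'' x)) y))"
    using DS(5) by simp
  also have "\<dots> \<le> ereal (\<integral>x. phi x \<partial>\<mu>) + ereal (\<integral>y. psi y \<partial>nu')"
    by (rule weak_dual[OF DS(1) DS(2)])
  also have "\<dots> = OT e c \<mu> nu'" by (rule OT_eq[symmetric])
  finally show ?thesis .
qed

lemma Dual_opt: "Dual e c \<mu> nu' (\<lambda>x. ereal (phi x)) (\<lambda>y. ereal (psi y))
     = ereal (\<integral>x. phi x \<partial>\<mu>) + ereal (\<integral>y. psi y \<partial>nu')"
proof -
  note DS = Dual_semi[OF phi_meas phi_abs]
  have "Dual e c \<mu> nu' (\<lambda>x. ereal (phi x)) (\<lambda>y. ereal (psi y)) = eint \<mu> (\<lambda>x. ereal (phi x)) + eint nu' (\<lambda>y. ereal (psi y))"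
    using DS(5) unfolding psi_def .
  then show ?thesis using eint_integrable[OF phi_int] eint_integrable[OF psi_int] by simp
qed

end

theorem mainTheorem16:
  fixes c :: "'x::polish_space \<Rightarrow> 'y::polish_space \<Rightarrow> real"
    and \<epsilon> :: real
    and \<mu> :: "'x measure" and \<nu> :: "'y measure"
    and \<psi>\<^sub>0 :: "'y \<Rightarrow> ereal"
  assumes c_meas: "(\<lambda>(x, y). c x y) \<in> borel_measurable (borel \<Otimes>\<^sub>M borel)"
    and c_bdd: "\<And>x y. \<bar>c x y\<bar> \<le> 1"
    and eps_pos: "\<epsilon> > 0"
    and mu: "prob_space \<mu>" "sets \<mu> = sets (borel :: 'x measure)"
    and nu: "prob_space \<nu>" "sets \<nu> = sets (borel :: 'y measure)"
    and psi0: "\<psi>\<^sub>0 \<in> Lexp \<epsilon> \<nu>"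
  shows "let \<phi> = ctransX \<epsilon> c \<nu> \<psi>\<^sub>0;
             \<psi> = ctransY \<epsilon> c \<mu> (\<lambda>x. ereal (\<phi> x));
             \<nu>' = density \<nu> (\<lambda>y. \<integral>\<^sup>+ x. exp_eps \<epsilon> (ereal (\<phi> x) + \<psi>\<^sub>0 y - ereal (c x y)) \<partial>\<mu>)
         in prob_space \<nu>'
            \<and> (\<lambda>x. ereal (\<phi> x)) \<in> Lexp \<epsilon> \<mu>
            \<and> (\<lambda>y. ereal (\<psi> y)) \<in> Lexp \<epsilon> \<nu>'
            \<and> (\<forall>\<phi>' \<in> Lexp \<epsilon> \<mu>. \<forall>\<psi>' \<in> Lexp \<epsilon> \<nu>'.
                 Dual \<epsilon> c \<mu> \<nu>' \<phi>' \<psi>' \<le> Dual \<epsilon> c \<mu> \<nu>' (\<lambda>x. ereal (\<phi> x)) (\<lambda>y. ereal (\<psi> y)))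
            \<and> OT \<epsilon> c \<mu> \<nu>' = eint \<mu> (\<lambda>x. ereal (\<phi> x)) + eint \<nu>' (\<lambda>y. ereal (\<psi> y))
            \<and> (\<exists>\<phi>'' \<in> Fce \<epsilon> c. OT \<epsilon> c \<mu> \<nu>' =
                  eint \<mu> (\<lambda>x. ereal (\<phi>'' x)) + eint \<nu>' (\<lambda>y. ereal (ctransY \<epsilon> c \<mu> (\<lambda>x. ereal (\<phi>'' x)) y)))
            \<and> (\<forall>\<phi>'' \<in> Fce \<epsilon> c.
                  eint \<mu> (\<lambda>x. ereal (\<phi>'' x)) + eint \<nu>' (\<lambda>y. ereal (ctransY \<epsilon> c \<mu> (\<lambda>x. ereal (\<phi>'' x)) y))
                  \<le> OT \<epsilon> c \<mu> \<nu>')"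
proof -
  interpret S c \<epsilon> \<mu> \<nu> \<psi>\<^sub>0
    by (rule S.intro[OF c_meas c_bdd eps_pos mu(1) mu(2) nu(1) nu(2) psi0])
  have e1: "eint \<mu> (\<lambda>x. ereal (phi x)) + eint nu' (\<lambda>y. ereal (psi y))
      = ereal (\<integral>x. phi x \<partial>\<mu>) + ereal (\<integral>y. psi y \<partial>nu')"
    using eint_integrable[OF phi_int] eint_integrable[OF psi_int] by simp
  show ?thesis
    unfolding Let_def phi_def[symmetric] psi_def[symmetric] nu'_def[symmetric]
    using prob_nu' phi_Lexp psi_Lexp' weak_dual Dual_opt OT_eq e1 fce_exists fce_upper
    by auto
qed


end
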